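(* Let $\mathsf{L}$ be a coherent normal modal logic for which $\mathcal{V}_\mathsf{L}$ is countably canonical. Then for any stable term $t(x,\bar{u})$ in which $x$ occurs only positively, there exists $n\in\mathbb{N}$ such that $\vdash_\mathsf{L} t_+^n(x,\bar{u})\leftrightarrow t_+^{n+1}(x,\bar{u})$, where $t_+(x,\bar{u}) := x\vee t(x,\bar{u})$.
   Context: $\mathcal{V}_\mathsf{L}$ denotes the variety of modal algebras corresponding to $\mathsf{L}$; $\mathsf{L}$ is coherent if $\mathcal{V}_\mathsf{L}$ is coherent (every finitely generated subalgebra of a finitely presented member is finitely presented). $\mathcal{V}_\mathsf{L}$ is countably canonical if the canonical extension $\mathbf{A}^\sigma$ of every countable $\mathbf{A}\in\mathcal{V}_\mathsf{L}$ belongs to $\mathcal{V}_\mathsf{L}$. In a canonical extension $\mathbf{A}^\sigma$ of a Boolean algebra with operators, the basic operations are interpreted as the canonical extensions of the operations of $\mathbf{A}$; a term $t$ is stable if for every such algebra $\mathbf{A}$, the canonical extension $(t^{\mathbf{A}})^\sigma$ of the term function coincides with the term function $t^{\mathbf{A}^\sigma}$. Iterates: $s^0(x,\bar{u}):=x$, $s^{k+1}(x,\bar{u}):=s(s^k(x,\bar{u}),\bar{u})$. *)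

theory Defs
  imports Main
begin

datatype form = Var nat | Bot | Neg form | And form form | Or form form | Box form

definition Imp :: "form \<Rightarrow> form \<Rightarrow> form" where
  "Imp p q = Or (Neg p) q"

definition Iff :: "form \<Rightarrow> form \<Rightarrow> form" where
  "Iff p q = And (Imp p q) (Imp q p)"

fun vars :: "form \<Rightarrow> nat set" where
  "vars (Var n) = {n}"
| "vars Bot = {}"
| "vars (Neg p) = vars p"
| "vars (And p q) = vars p \<union> vars q"
| "vars (Or p q) = vars p \<union> vars q"
| "vars (Box p) = vars p"

fun subst :: "(nat \<Rightarrow> form) \<Rightarrow> form \<Rightarrow> form" where
  "subst \<sigma> (Var n) = \<sigma> n"
| "subst \<sigma> Bot = Bot"
| "subst \<sigma> (Neg p) = Neg (subst \<sigma> p)"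
| "subst \<sigma> (And p q) = And (subst \<sigma> p) (subst \<sigma> q)"
| "subst \<sigma> (Or p q) = Or (subst \<sigma> p) (subst \<sigma> q)"
| "subst \<sigma> (Box p) = Box (subst \<sigma> p)"

definition subst1 :: "nat \<Rightarrow> form \<Rightarrow> form \<Rightarrow> form" where
  "subst1 x s t = subst (\<lambda>i. if i = x then s else Var i) t"

definition tplus :: "nat \<Rightarrow> form \<Rightarrow> form" where
  "tplus x t = Or (Var x) t"

fun iter :: "nat \<Rightarrow> form \<Rightarrow> nat \<Rightarrow> form" where
  "iter x s 0 = Var x"
| "iter x s (Suc k) = subst1 x (iter x s k) s"

fun pos_only :: "nat \<Rightarrow> form \<Rightarrow> bool" and neg_only :: "nat \<Rightarrow> form \<Rightarrow> bool" where
  "pos_only x (Var n) = True"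
| "pos_only x Bot = True"
| "pos_only x (Neg p) = neg_only x p"
| "pos_only x (And p q) = (pos_only x p \<and> pos_only x q)"
| "pos_only x (Or p q) = (pos_only x p \<and> pos_only x q)"
| "pos_only x (Box p) = pos_only x p"
| "neg_only x (Var n) = (n \<noteq> x)"
| "neg_only x Bot = True"
| "neg_only x (Neg p) = pos_only x p"
| "neg_only x (And p q) = (neg_only x p \<and> neg_only x q)"
| "neg_only x (Or p q) = (neg_only x p \<and> neg_only x q)"
| "neg_only x (Box p) = neg_only x p"

fun box_free :: "form \<Rightarrow> bool" where
  "box_free (Var n) = True"
| "box_free Bot = True"
| "box_free (Neg p) = box_free p"
| "box_free (And p q) = (box_free p \<and> box_free q)"
| "box_free (Or p q) = (box_free p \<and> box_free q)"
| "box_free (Box p) = False"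

fun peval :: "(nat \<Rightarrow> bool) \<Rightarrow> form \<Rightarrow> bool" where
  "peval v (Var n) = v n"
| "peval v Bot = False"
| "peval v (Neg p) = (\<not> peval v p)"
| "peval v (And p q) = (peval v p \<and> peval v q)"
| "peval v (Or p q) = (peval v p \<or> peval v q)"
| "peval v (Box p) = False"

definition taut :: "form \<Rightarrow> bool" where
  "taut p \<longleftrightarrow> box_free p \<and> (\<forall>v. peval v p)"

definition normal_logic :: "form set \<Rightarrow> bool" where
  "normal_logic L \<longleftrightarrow>
     (\<forall>p \<sigma>. taut p \<longrightarrow> subst \<sigma> p \<in> L) \<and>
     Imp (Box (Imp (Var 0) (Var 1))) (Imp (Box (Var 0)) (Box (Var 1))) \<in> L \<and>
     (\<forall>p q. p \<in> L \<longrightarrow> Imp p q \<in> L \<longrightarrow> q \<in> L) \<and>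
     (\<forall>p. p \<in> L \<longrightarrow> Box p \<in> L) \<and>
     (\<forall>p \<sigma>. p \<in> L \<longrightarrow> subst \<sigma> p \<in> L)"

record 'a malg =
  mcar :: "'a set"
  mjoin :: "'a \<Rightarrow> 'a \<Rightarrow> 'a"
  mmeet :: "'a \<Rightarrow> 'a \<Rightarrow> 'a"
  mcompl :: "'a \<Rightarrow> 'a"
  mbot :: 'a
  mtop :: 'a
  mbox :: "'a \<Rightarrow> 'a"

definition modal_algebra :: "'a malg \<Rightarrow> bool" where
  "modal_algebra A \<longleftrightarrow>
    (let C = mcar A; j = mjoin A; m = mmeet A; c = mcompl A in
     mbot A \<in> C \<and> mtop A \<in> C \<and>
     (\<forall>a\<in>C. \<forall>b\<in>C. j a b \<in> C \<and> m a b \<in> C) \<and> (\<forall>a\<in>C. c a \<in> C \<and> mbox A a \<in> C) \<and>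
     (\<forall>a\<in>C. \<forall>b\<in>C. j a b = j b a \<and> m a b = m b a) \<and>
     (\<forall>a\<in>C. \<forall>b\<in>C. \<forall>d\<in>C. j a (j b d) = j (j a b) d \<and> m a (m b d) = m (m a b) d) \<and>
     (\<forall>a\<in>C. \<forall>b\<in>C. j a (m a b) = a \<and> m a (j a b) = a) \<and>
     (\<forall>a\<in>C. \<forall>b\<in>C. \<forall>d\<in>C. m a (j b d) = j (m a b) (m a d)) \<and>
     (\<forall>a\<in>C. j a (c a) = mtop A \<and> m a (c a) = mbot A) \<and>
     mbox A (mtop A) = mtop A \<and>
     (\<forall>a\<in>C. \<forall>b\<in>C. mbox A (m a b) = m (mbox A a) (mbox A b)))"

fun eval :: "'a malg \<Rightarrow> (nat \<Rightarrow> 'a) \<Rightarrow> form \<Rightarrow> 'a" where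
  "eval A v (Var n) = v n"
| "eval A v Bot = mbot A"
| "eval A v (Neg p) = mcompl A (eval A v p)"
| "eval A v (And p q) = mmeet A (eval A v p) (eval A v q)"
| "eval A v (Or p q) = mjoin A (eval A v p) (eval A v q)"
| "eval A v (Box p) = mbox A (eval A v p)"

definition assign :: "'a malg \<Rightarrow> (nat \<Rightarrow> 'a) \<Rightarrow> bool" where
  "assign A v \<longleftrightarrow> (\<forall>i. v i \<in> mcar A)"

definition in_VL :: "form set \<Rightarrow> 'a malg \<Rightarrow> bool" where
  "in_VL L A \<longleftrightarrow> modal_algebra A \<and>
     (\<forall>p\<in>L. \<forall>v. assign A v \<longrightarrow> eval A v p = mtop A)"

text \<open>A is finitely presented in V_L iff A is isomorphic to F_{V_L}(n)/theta(E) for some n and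
  finite set of equations E in n variables; equivalently: A has generators a_0..a_{n-1}
  satisfying E, and every equation in n variables satisfied by the generators is a consequence
  of E in V_L.  (Consequence is checked in countable members of V_L, represented on nat.)\<close>
definition fin_pres :: "form set \<Rightarrow> 'a malg \<Rightarrow> bool" where
  "fin_pres L A \<longleftrightarrow> in_VL L A \<and>
    (\<exists>n a E. assign A a \<and> finite E \<and>
       (\<forall>(s,t)\<in>E. vars s \<subseteq> {..<n} \<and> vars t \<subseteq> {..<n}) \<and>
       mcar A = {eval A a p | p. vars p \<subseteq> {..<n}} \<and>
       (\<forall>(s,t)\<in>E. eval A a s = eval A a t) \<and>
       (\<forall>p q. vars p \<subseteq> {..<n} \<longrightarrow> vars q \<subseteq> {..<n} \<longrightarrow> eval A a p = eval A a q \<longrightarrow>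
          (\<forall>(B :: nat malg) b. in_VL L B \<longrightarrow> assign B b \<longrightarrow>
              (\<forall>(s,t)\<in>E. eval B b s = eval B b t) \<longrightarrow> eval B b p = eval B b q)))"

definition gen :: "'a malg \<Rightarrow> 'a set \<Rightarrow> 'a set" where
  "gen A G = {eval A v p | v p. \<forall>i. v i \<in> insert (mbot A) G}"

text \<open>V_L coherent: every finitely generated subalgebra of a finitely presented member
  (countable, so represented on nat) is finitely presented.\<close>
definition coherent :: "form set \<Rightarrow> bool" where
  "coherent L \<longleftrightarrow>
    (\<forall>(A :: nat malg) G. fin_pres L A \<longrightarrow> finite G \<longrightarrow> G \<subseteq> mcar A \<longrightarrow>
        fin_pres L (A\<lparr>mcar := gen A G\<rparr>))"

definition ultrafilter :: "'a malg \<Rightarrow> 'a set \<Rightarrow> bool" where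
  "ultrafilter A U \<longleftrightarrow> U \<subseteq> mcar A \<and> mtop A \<in> U \<and> mbot A \<notin> U \<and>
     (\<forall>a\<in>U. \<forall>b\<in>U. mmeet A a b \<in> U) \<and>
     (\<forall>a\<in>U. \<forall>b\<in>mcar A. mmeet A a b = a \<longrightarrow> b \<in> U) \<and>
     (\<forall>a\<in>mcar A. a \<in> U \<or> mcompl A a \<in> U)"

definition Uf :: "'a malg \<Rightarrow> 'a set set" where
  "Uf A = {U. ultrafilter A U}"

definition emb :: "'a malg \<Rightarrow> 'a \<Rightarrow> 'a set set" where
  "emb A a = {U \<in> Uf A. a \<in> U}"

definition closed_el :: "'a malg \<Rightarrow> 'a set set \<Rightarrow> bool" where
  "closed_el A k \<longleftrightarrow> (\<exists>S \<subseteq> mcar A. k = Uf A \<inter> \<Inter> (emb A ` S))"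

definition open_el :: "'a malg \<Rightarrow> 'a set set \<Rightarrow> bool" where
  "open_el A o' \<longleftrightarrow> (\<exists>S \<subseteq> mcar A. o' = \<Union> (emb A ` S))"

text \<open>sigma-extension (Gehrke-Jonsson) of a map f : A^V \<rightarrow> A, where V is the (finite) set of
  variables f depends on; arguments are assignments.\<close>
definition sigma_ext :: "'a malg \<Rightarrow> nat set \<Rightarrow> ((nat \<Rightarrow> 'a) \<Rightarrow> 'a) \<Rightarrow>
    (nat \<Rightarrow> 'a set set) \<Rightarrow> 'a set set" where
  "sigma_ext A V f x = \<Union> { Uf A \<inter> \<Inter> { emb A (f a) | a. assign A a \<and>
                               (\<forall>i\<in>V. k i \<subseteq> emb A (a i) \<and> emb A (a i) \<subseteq> o' i) }
                          | k o'. \<forall>i\<in>V. closed_el A (k i) \<and> open_el A (o' i) \<and>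
                                      k i \<subseteq> x i \<and> x i \<subseteq> o' i }"

definition canext :: "'a malg \<Rightarrow> 'a set set malg" where
  "canext A = \<lparr> mcar = Pow (Uf A), mjoin = (\<union>), mmeet = (\<inter>),
               mcompl = (\<lambda>X. Uf A - X), mbot = {}, mtop = Uf A,
               mbox = (\<lambda>X. sigma_ext A {0} (\<lambda>a. mbox A (a 0)) (\<lambda>_. X)) \<rparr>"

text \<open>V_L countably canonical (countable algebras represented on nat).\<close>
definition countably_canonical :: "form set \<Rightarrow> bool" where
  "countably_canonical L \<longleftrightarrow> (\<forall>A :: nat malg. in_VL L A \<longrightarrow> in_VL L (canext A))"

text \<open>Stable term: canonical extension of the term function equals the term function of the
  canonical extension (checked over modal algebras on nat, i.e. countable ones).\<close>
definition stable :: "form \<Rightarrow> bool" where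
  "stable t \<longleftrightarrow> (\<forall>A :: nat malg. modal_algebra A \<longrightarrow>
     (\<forall>x. assign (canext A) x \<longrightarrow>
        sigma_ext A (vars t) (\<lambda>a. eval A a t) x = eval (canext A) x t))"

end

theory Submission
  imports Defs "HOL-Library.Countable"
begin


instance form :: countable by countable_datatype

fun pv :: "(form \<Rightarrow> bool) \<Rightarrow> form \<Rightarrow> bool" where
  "pv V (Var n) = V (Var n)"
| "pv V Bot = False"
| "pv V (Neg p) = (\<not> pv V p)"
| "pv V (And p q) = (pv V p \<and> pv V q)"
| "pv V (Or p q) = (pv V p \<or> pv V q)"
| "pv V (Box p) = V (Box p)"

fun sk :: "form \<Rightarrow> form" where
  "sk (Var n) = Var (to_nat (Var n))"
| "sk Bot = Bot"
| "sk (Neg p) = Neg (sk p)"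
| "sk (And p q) = And (sk p) (sk q)"
| "sk (Or p q) = Or (sk p) (sk q)"
| "sk (Box p) = Var (to_nat (Box p))"

lemma sk_bf: "box_free (sk p)" by (induct p) auto
lemma sk_subst: "subst from_nat (sk p) = p" by (induct p) auto
lemma sk_peval: "peval v (sk p) = pv (\<lambda>a. v (to_nat a)) p" by (induct p) auto

fun conjs :: "form list \<Rightarrow> form" where
  "conjs [] = Neg Bot"
| "conjs (p # ps) = And p (conjs ps)"

lemma pv_conjs[simp]: "pv V (conjs l) = (\<forall>p\<in>set l. pv V p)" by (induct l) auto
lemma pv_Imp[simp]: "pv V (Imp p q) = (pv V p \<longrightarrow> pv V q)" by (simp add: Imp_def)
lemma pv_Iff[simp]: "pv V (Iff p q) = (pv V p \<longleftrightarrow> pv V q)" by (auto simp add: Iff_def)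

fun bxn :: "nat \<Rightarrow> form \<Rightarrow> form" where
  "bxn 0 p = p"
| "bxn (Suc n) p = Box (bxn n p)"

definition bcl :: "form set \<Rightarrow> form set" where
  "bcl G = {bxn j g | j g. g \<in> G}"

lemma subst_Imp[simp]: "subst \<sigma> (Imp p q) = Imp (subst \<sigma> p) (subst \<sigma> q)" by (simp add: Imp_def)
lemma subst_Iff[simp]: "subst \<sigma> (Iff p q) = Iff (subst \<sigma> p) (subst \<sigma> q)" by (simp add: Iff_def)
lemma subst_conjs: "subst \<sigma> (conjs l) = conjs (map (subst \<sigma>) l)" by (induct l) auto
lemma subst_bxn: "subst \<sigma> (bxn j p) = bxn j (subst \<sigma> p)" by (induct j) auto
lemma vars_subst: "vars (subst \<sigma> p) = (\<Union>i\<in>vars p. vars (\<sigma> i))" by (induct p) auto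
lemma vars_Imp[simp]: "vars (Imp p q) = vars p \<union> vars q" by (simp add: Imp_def)
lemma vars_Iff[simp]: "vars (Iff p q) = vars p \<union> vars q" by (auto simp add: Iff_def)
lemma subst_Var: "subst Var p = p" by (induct p) auto
lemma subst_cong: "(\<And>i. i \<in> vars p \<Longrightarrow> \<sigma> i = \<tau> i) \<Longrightarrow> subst \<sigma> p = subst \<tau> p" by (induct p) auto
lemma subst_subst: "subst \<sigma> (subst \<tau> p) = subst (\<lambda>i. subst \<sigma> (\<tau> i)) p" by (induct p) auto

locale NL =
  fixes L :: "form set"
  assumes nl: "normal_logic L"
begin

lemma L_mp: "p \<in> L \<Longrightarrow> Imp p q \<in> L \<Longrightarrow> q \<in> L"
  using nl unfolding normal_logic_def by blast

lemma L_nec: "p \<in> L \<Longrightarrow> Box p \<in> L"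
  using nl unfolding normal_logic_def by blast

lemma L_subst: "p \<in> L \<Longrightarrow> subst \<sigma> p \<in> L"
  using nl unfolding normal_logic_def by blast

lemma L_pv: assumes "\<And>V. pv V p" shows "p \<in> L"
proof -
  have "taut (sk p)" unfolding taut_def using sk_bf assms by (simp add: sk_peval)
  then have "subst from_nat (sk p) \<in> L" using nl unfolding normal_logic_def by blast
  then show ?thesis by (simp add: sk_subst)
qed

lemma L_taut: "set ps \<subseteq> L \<Longrightarrow> (\<And>V. (\<forall>p\<in>set ps. pv V p) \<Longrightarrow> pv V q) \<Longrightarrow> q \<in> L"
proof (induct ps arbitrary: q)
  case Nil then show ?case by (intro L_pv) simp
next
  case (Cons p ps)
  have "Imp p q \<in> L"
  proof (rule Cons(1))
    show "set ps \<subseteq> L" using Cons(2) by simp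
    fix V assume "\<forall>p\<in>set ps. pv V p"
    then show "pv V (Imp p q)" using Cons(3)[of V] by simp
  qed
  moreover have "p \<in> L" using Cons(2) by simp
  ultimately show ?case using L_mp by blast
qed

lemma L_K: "Imp (Box (Imp a b)) (Imp (Box a) (Box b)) \<in> L"
proof -
  have "Imp (Box (Imp (Var 0) (Var 1))) (Imp (Box (Var 0)) (Box (Var 1))) \<in> L"
    using nl unfolding normal_logic_def by blast
  from L_subst[OF this, of "\<lambda>i. if i = 0 then a else b"] show ?thesis by simp
qed

lemma L_taut1: "p \<in> L \<Longrightarrow> (\<And>V. pv V p \<Longrightarrow> pv V q) \<Longrightarrow> q \<in> L"
  by (rule L_taut[of "[p]"]) auto

lemma L_taut2: "p \<in> L \<Longrightarrow> p' \<in> L \<Longrightarrow> (\<And>V. pv V p \<Longrightarrow> pv V p' \<Longrightarrow> pv V q) \<Longrightarrow> q \<in> L"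
  by (rule L_taut[of "[p, p']"]) auto

lemma L_boxmono: "Imp a b \<in> L \<Longrightarrow> Imp (Box a) (Box b) \<in> L"
  by (rule L_taut2[OF L_nec L_K]) auto

lemma L_boxand: "Imp (And (Box a) (Box b)) (Box (And a b)) \<in> L"
proof -
  have 1: "Imp (Box a) (Box (Imp b (And a b))) \<in> L"
    by (rule L_boxmono) (rule L_pv, auto)
  show ?thesis by (rule L_taut2[OF 1 L_K[of b "And a b"]]) auto
qed

lemma L_box_conjs: "Imp (conjs (map Box l)) (Box (conjs l)) \<in> L"
proof (induct l)
  case Nil
  have "Box (Neg Bot) \<in> L" by (rule L_nec, rule L_pv, auto)
  then show ?case by (rule L_taut1) auto
next
  case (Cons a l)
  show ?case by (rule L_taut2[OF Cons L_boxand[of a "conjs l"]]) auto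
qed

definition prov :: "form set \<Rightarrow> form \<Rightarrow> bool" where
  "prov G p \<longleftrightarrow> (\<exists>l. set l \<subseteq> bcl G \<and> Imp (conjs l) p \<in> L)"

lemma prov_L: "p \<in> L \<Longrightarrow> prov G p"
  unfolding prov_def by (intro exI[of _ "[]"]) (auto elim: L_taut1)

lemma prov_G: "g \<in> G \<Longrightarrow> prov G g"
  unfolding prov_def bcl_def
  by (intro exI[of _ "[g]"]) (auto intro!: exI[of _ 0] L_pv)

lemma prov_conjs: "\<forall>p\<in>set ps. prov G p \<Longrightarrow> prov G (conjs ps)"
proof (induct ps)
  case Nil then show ?case by (intro prov_L L_pv) simp
next
  case (Cons p ps)
  then obtain l1 l2 where l: "set l1 \<subseteq> bcl G" "Imp (conjs l1) p \<in> L" "set l2 \<subseteq> bcl G" "Imp (conjs l2) (conjs ps) \<in> L"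
    unfolding prov_def by auto
  have "Imp (conjs (l1 @ l2)) (conjs (p # ps)) \<in> L"
    by (rule L_taut2[OF l(2) l(4)]) auto
  then show ?case using l unfolding prov_def by (intro exI[of _ "l1 @ l2"]) auto
qed

lemma prov_taut: "\<forall>p\<in>set ps. prov G p \<Longrightarrow> (\<And>V. (\<forall>p\<in>set ps. pv V p) \<Longrightarrow> pv V q) \<Longrightarrow> prov G q"
proof -
  assume a: "\<forall>p\<in>set ps. prov G p" and b: "\<And>V. (\<forall>p\<in>set ps. pv V p) \<Longrightarrow> pv V q"
  from prov_conjs[OF a] obtain l where l: "set l \<subseteq> bcl G" "Imp (conjs l) (conjs ps) \<in> L"
    unfolding prov_def by auto
  have "Imp (conjs l) q \<in> L" by (rule L_taut1[OF l(2)]) (use b in auto)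
  then show ?thesis using l unfolding prov_def by auto
qed

lemma prov_taut1: "prov G p \<Longrightarrow> (\<And>V. pv V p \<Longrightarrow> pv V q) \<Longrightarrow> prov G q"
  by (rule prov_taut[of "[p]"]) auto

lemma prov_taut2: "prov G p \<Longrightarrow> prov G p' \<Longrightarrow> (\<And>V. pv V p \<Longrightarrow> pv V p' \<Longrightarrow> pv V q) \<Longrightarrow> prov G q"
  by (rule prov_taut[of "[p, p']"]) auto

lemma prov_taut3: "prov G p \<Longrightarrow> prov G p' \<Longrightarrow> prov G p'' \<Longrightarrow> (\<And>V. pv V p \<Longrightarrow> pv V p' \<Longrightarrow> pv V p'' \<Longrightarrow> pv V q) \<Longrightarrow> prov G q"
  by (rule prov_taut[of "[p, p', p'']"]) auto

lemma prov_taut0: "(\<And>V. pv V q) \<Longrightarrow> prov G q"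
  by (rule prov_taut[of "[]"]) auto

lemma prov_nec: "prov G p \<Longrightarrow> prov G (Box p)"
proof -
  assume "prov G p"
  then obtain l where l: "set l \<subseteq> bcl G" "Imp (conjs l) p \<in> L" unfolding prov_def by auto
  have "set (map Box l) \<subseteq> bcl G"
  proof
    fix q assume "q \<in> set (map Box l)"
    then obtain q' where "q' \<in> set l" "q = Box q'" by auto
    then obtain j g where "q = Box (bxn j g)" "g \<in> G" using l(1) unfolding bcl_def by blast
    then have "q = bxn (Suc j) g" "g \<in> G" by auto
    then show "q \<in> bcl G" unfolding bcl_def by blast
  qed
  moreover have "Imp (conjs (map Box l)) (Box p) \<in> L"
    by (rule L_taut2[OF L_box_conjs[of l] L_boxmono[OF l(2)]]) auto
  ultimately show ?thesis unfolding prov_def by blast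
qed

lemma prov_boxmono: "prov G (Imp p q) \<Longrightarrow> prov G (Imp (Box p) (Box q))"
  by (rule prov_taut2[OF prov_nec prov_L[OF L_K[of p q]]]) auto

lemma prov_mono: "G \<subseteq> G' \<Longrightarrow> prov G p \<Longrightarrow> prov G' p"
  unfolding prov_def bcl_def by blast

lemma L_bxn: "p \<in> L \<Longrightarrow> bxn j p \<in> L"
  by (induct j) (auto intro: L_nec)

lemma prov_subst: assumes "prov G p" "\<forall>g\<in>G. subst \<sigma> g \<in> L" shows "subst \<sigma> p \<in> L"
proof -
  obtain l where l: "set l \<subseteq> bcl G" "Imp (conjs l) p \<in> L" using assms(1) unfolding prov_def by auto
  have "\<forall>q\<in>set l. subst \<sigma> q \<in> L"
  proof
    fix q assume "q \<in> set l"
    then obtain j g where "q = bxn j g" "g \<in> G" using l(1) unfolding bcl_def by blast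
    then show "subst \<sigma> q \<in> L" using assms(2) by (simp add: subst_bxn L_bxn)
  qed
  then have "subst \<sigma> (conjs l) \<in> L"
    unfolding subst_conjs by (intro L_taut[of "map (subst \<sigma>) l"]) auto
  moreover have "Imp (subst \<sigma> (conjs l)) (subst \<sigma> p) \<in> L" using L_subst[OF l(2)] by simp
  ultimately show ?thesis using L_mp by blast
qed

lemma prov_finite: assumes "prov G p" shows "\<exists>G0. finite G0 \<and> G0 \<subseteq> G \<and> prov G0 p"
proof -
  obtain l where l: "set l \<subseteq> bcl G" "Imp (conjs l) p \<in> L" using assms(1) unfolding prov_def by auto
  have "\<forall>q\<in>set l. \<exists>gj. fst gj \<in> G \<and> q = bxn (snd gj) (fst gj)" using l(1) unfolding bcl_def by fastforce
  then obtain f where f: "\<forall>q\<in>set l. fst (f q) \<in> G \<and> q = bxn (snd (f q)) (fst (f q))"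
    by metis
  let ?G0 = "fst ` f ` set l"
  have "set l \<subseteq> bcl ?G0" unfolding bcl_def
  proof
    fix q assume "q \<in> set l"
    then show "q \<in> {bxn j g |j g. g \<in> ?G0}" using f by blast
  qed
  moreover have "?G0 \<subseteq> G" using f by blast
  ultimately show ?thesis using l(2) unfolding prov_def by blast
qed

end


locale LAc = NL +
  fixes N :: nat and G :: "form set"
begin

definition eqv :: "form \<Rightarrow> form \<Rightarrow> bool" where "eqv p q \<longleftrightarrow> prov G (Iff p q)"

lemma eqv_taut: "(\<And>V. pv V p = pv V q) \<Longrightarrow> eqv p q"
  unfolding eqv_def by (rule prov_taut0) simp

lemma eqv_refl: "eqv p p" by (rule eqv_taut) simp
lemma eqv_sym: "eqv p q \<Longrightarrow> eqv q p" unfolding eqv_def by (erule prov_taut1) auto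
lemma eqv_trans: "eqv p q \<Longrightarrow> eqv q r \<Longrightarrow> eqv p r" unfolding eqv_def by (erule prov_taut2) auto

lemma eqv_Neg: "eqv p q \<Longrightarrow> eqv (Neg p) (Neg q)" unfolding eqv_def by (erule prov_taut1) auto
lemma eqv_And: "eqv p q \<Longrightarrow> eqv p' q' \<Longrightarrow> eqv (And p p') (And q q')" unfolding eqv_def by (erule prov_taut2) auto
lemma eqv_Or: "eqv p q \<Longrightarrow> eqv p' q' \<Longrightarrow> eqv (Or p p') (Or q q')" unfolding eqv_def by (erule prov_taut2) auto
lemma eqv_Box: "eqv p q \<Longrightarrow> eqv (Box p) (Box q)"
proof -
  assume "eqv p q"
  then have "prov G (Imp p q)" "prov G (Imp q p)" unfolding eqv_def by (auto elim: prov_taut1)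
  then have h: "prov G (Imp (Box p) (Box q))" "prov G (Imp (Box q) (Box p))" by (auto intro: prov_boxmono)
  show ?thesis unfolding eqv_def by (rule prov_taut2[OF h]) auto
qed

lemma eqv_subst: "(\<And>i. i \<in> vars p \<Longrightarrow> eqv (\<sigma> i) (\<tau> i)) \<Longrightarrow> eqv (subst \<sigma> p) (subst \<tau> p)"
  by (induct p) (auto intro: eqv_refl eqv_Neg eqv_And eqv_Or eqv_Box)

definition rep :: "form \<Rightarrow> form" where "rep p = from_nat (LEAST n. eqv p (from_nat n))"

lemma rep_eqv: "eqv p (rep p)"
  unfolding rep_def by (rule LeastI[of _ "to_nat p"]) (simp add: eqv_refl)

lemma rep_cong: "eqv p q \<Longrightarrow> rep p = rep q"
proof -
  assume "eqv p q"
  then have "(\<lambda>n. eqv p (from_nat n)) = (\<lambda>n. eqv q (from_nat n))"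
    by (auto intro: eqv_trans eqv_sym)
  then show ?thesis unfolding rep_def by simp
qed

definition cls :: "form \<Rightarrow> nat" where "cls p = to_nat (rep p)"

lemma cls_eq: "cls p = cls q \<longleftrightarrow> eqv p q"
proof
  assume "cls p = cls q"
  then have "rep p = rep q" unfolding cls_def by simp
  then show "eqv p q" using rep_eqv[of p] rep_eqv[of q] by (metis eqv_sym eqv_trans)
next
  assume "eqv p q" then show "cls p = cls q" unfolding cls_def using rep_cong by simp
qed

lemma eqv_cls: "eqv p q \<Longrightarrow> cls p = cls q" using cls_eq by blast

lemma from_cls[simp]: "from_nat (cls p) = rep p" unfolding cls_def by simp

lemma cls_rep[simp]: "cls (rep p) = cls p" by (rule eqv_cls, rule eqv_sym, rule rep_eqv)

definition LA :: "nat malg" where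
  "LA = \<lparr> mcar = {cls p | p. vars p \<subseteq> {..<N}},
          mjoin = (\<lambda>a b. cls (Or (from_nat a) (from_nat b))),
          mmeet = (\<lambda>a b. cls (And (from_nat a) (from_nat b))),
          mcompl = (\<lambda>a. cls (Neg (from_nat a))),
          mbot = cls Bot, mtop = cls (Neg Bot),
          mbox = (\<lambda>a. cls (Box (from_nat a))) \<rparr>"

lemma rep_eqv': "eqv (rep p) p" by (rule eqv_sym, rule rep_eqv)

lemma cls_cong1: "cls (Neg (rep p)) = cls (Neg p)" "cls (Box (rep p)) = cls (Box p)"
  by (rule eqv_cls, rule eqv_Neg, rule rep_eqv') (rule eqv_cls, rule eqv_Box, rule rep_eqv')

lemma cls_cong2: "cls (And (rep p) (rep q)) = cls (And p q)" "cls (Or (rep p) (rep q)) = cls (Or p q)"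
  by (rule eqv_cls, rule eqv_And, rule rep_eqv', rule rep_eqv')  (rule eqv_cls, rule eqv_Or, rule rep_eqv', rule rep_eqv')

lemma LA_car: "mcar LA = {cls p | p. vars p \<subseteq> {..<N}}"
  unfolding LA_def by simp

lemma LA_simps[simp]:
  "mjoin LA (cls p) (cls q) = cls (Or p q)"
  "mmeet LA (cls p) (cls q) = cls (And p q)"
  "mcompl LA (cls p) = cls (Neg p)"
  "mbox LA (cls p) = cls (Box p)"
  "mbot LA = cls Bot"
  "mtop LA = cls (Neg Bot)"
  unfolding LA_def by (simp_all add: cls_cong1 cls_cong2)

lemma car_cls: "a \<in> mcar LA \<Longrightarrow> a = cls (from_nat a)"
  by (auto simp: LA_car)

lemma car_iff: "a \<in> mcar LA \<longleftrightarrow> (\<exists>p. vars p \<subseteq> {..<N} \<and> a = cls p)"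
  by (auto simp: LA_car)

lemma cls_in: "vars p \<subseteq> {..<N} \<Longrightarrow> cls p \<in> mcar LA" by (auto simp: LA_car)

lemma ball_car: "(\<And>p. vars p \<subseteq> {..<N} \<Longrightarrow> P (cls p)) \<Longrightarrow> \<forall>a\<in>mcar LA. P a"
  by (auto simp: LA_car)

lemma eval_LA: "assign LA v \<Longrightarrow> eval LA v p = cls (subst (\<lambda>i. from_nat (v i)) p)"
proof (induct p)
  case (Var n)
  then have "v n \<in> mcar LA" unfolding assign_def by blast
  then show ?case by (simp only: eval.simps subst.simps car_cls[symmetric])
qed (simp_all only: eval.simps subst.simps LA_simps)


lemma modal_LA: "modal_algebra LA"
proof -
  have c1: "cls (Or p q) \<in> mcar LA" "cls (And p q) \<in> mcar LA" if "vars p \<subseteq> {..<N}" "vars q \<subseteq> {..<N}" for p q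
    using that by (auto intro!: cls_in)
  have c2: "cls (Neg p) \<in> mcar LA" "cls (Box p) \<in> mcar LA" if "vars p \<subseteq> {..<N}" for p
    using that by (auto intro!: cls_in)
  have c3: "cls Bot \<in> mcar LA" "cls (Neg Bot) \<in> mcar LA"
    by (auto intro!: cls_in)
  have b1: "cls (Box (Neg Bot)) = cls (Neg Bot)"
  proof (rule eqv_cls)
    have "Box (Neg Bot) \<in> L" by (rule L_nec, rule L_pv) simp
    then show "eqv (Box (Neg Bot)) (Neg Bot)" unfolding eqv_def by (rule prov_taut1[OF prov_L]) simp
  qed
  have b2: "cls (Box (And p q)) = cls (And (Box p) (Box q))" for p q
  proof (rule eqv_cls)
    have h: "Imp (Box (And p q)) (Box p) \<in> L" "Imp (Box (And p q)) (Box q) \<in> L"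
      by (rule L_boxmono, rule L_pv, simp)+
    show "eqv (Box (And p q)) (And (Box p) (Box q))" unfolding eqv_def
      by (rule prov_taut3[OF prov_L[OF h(1)] prov_L[OF h(2)] prov_L[OF L_boxand[of p q]]]) (unfold pv_Imp pv_Iff pv.simps, blast)
  qed
  have m1: "\<forall>a\<in>mcar LA. \<forall>b\<in>mcar LA. mjoin LA a b \<in> mcar LA \<and> mmeet LA a b \<in> mcar LA"
    by (intro ball_car) (simp add: c1)
  have m2: "\<forall>a\<in>mcar LA. mcompl LA a \<in> mcar LA \<and> mbox LA a \<in> mcar LA"
    by (intro ball_car) (simp add: c2)
  have m3: "\<forall>a\<in>mcar LA. \<forall>b\<in>mcar LA. mjoin LA a b = mjoin LA b a \<and> mmeet LA a b = mmeet LA b a"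
    by (intro ball_car) (simp, intro conjI eqv_cls eqv_taut, auto)
  have m4: "\<forall>a\<in>mcar LA. \<forall>b\<in>mcar LA. \<forall>d\<in>mcar LA. mjoin LA a (mjoin LA b d) = mjoin LA (mjoin LA a b) d
      \<and> mmeet LA a (mmeet LA b d) = mmeet LA (mmeet LA a b) d"
    by (intro ball_car) (simp, intro conjI eqv_cls eqv_taut, auto)
  have m5: "\<forall>a\<in>mcar LA. \<forall>b\<in>mcar LA. mjoin LA a (mmeet LA a b) = a \<and> mmeet LA a (mjoin LA a b) = a"
    by (intro ball_car) (simp, intro conjI eqv_cls eqv_taut, auto)
  have m6: "\<forall>a\<in>mcar LA. \<forall>b\<in>mcar LA. \<forall>d\<in>mcar LA. mmeet LA a (mjoin LA b d) = mjoin LA (mmeet LA a b) (mmeet LA a d)"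
    by (intro ball_car) (simp, intro conjI eqv_cls eqv_taut, auto)
  have m7: "\<forall>a\<in>mcar LA. mjoin LA a (mcompl LA a) = mtop LA \<and> mmeet LA a (mcompl LA a) = mbot LA"
    by (intro ball_car) (simp, intro conjI eqv_cls eqv_taut, auto)
  have m8: "\<forall>a\<in>mcar LA. \<forall>b\<in>mcar LA. mbox LA (mmeet LA a b) = mmeet LA (mbox LA a) (mbox LA b)"
    by (intro ball_car) (simp add: b2)
  have m9: "mbox LA (mtop LA) = mtop LA" using b1 by simp
  have c4: "mbot LA \<in> mcar LA" "mtop LA \<in> mcar LA" using c3 by simp_all
  note mm = m1 m2 m3 m4 m5 m6 m7 m8 m9 c4
  show ?thesis unfolding modal_algebra_def Let_def
    by (intro conjI; fact mm)
qed

lemma in_VL_LA: "in_VL L LA"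
  unfolding in_VL_def
proof (intro conjI modal_LA ballI allI impI)
  fix p v assume p: "p \<in> L" and v: "assign LA v"
  have "subst (\<lambda>i. from_nat (v i)) p \<in> L" using L_subst[OF p] .
  then have "eqv (subst (\<lambda>i. from_nat (v i)) p) (Neg Bot)" unfolding eqv_def by (rule prov_taut1[OF prov_L]) simp
  then show "eval LA v p = mtop LA" using eval_LA[OF v] eqv_cls by simp
qed

definition gv :: "nat \<Rightarrow> nat" where "gv i = (if i < N then cls (Var i) else cls Bot)"

lemma assign_gv: "assign LA gv"
  unfolding assign_def gv_def by (auto intro!: cls_in)

lemma eval_gv: "vars p \<subseteq> {..<N} \<Longrightarrow> eval LA gv p = cls p"
proof -
  assume a: "vars p \<subseteq> {..<N}"
  have "eval LA gv p = cls (subst (\<lambda>i. from_nat (gv i)) p)" using eval_LA[OF assign_gv] .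
  also have "\<dots> = cls (subst Var p)"
    by (rule eqv_cls, rule eqv_subst) (use a in \<open>auto simp: gv_def intro: eqv_sym rep_eqv\<close>)
  finally show ?thesis by (simp add: subst_Var)
qed

end


lemma eval_subst: "eval M v (subst \<sigma> p) = eval M (\<lambda>i. eval M v (\<sigma> i)) p" by (induct p) auto
lemma eval_cong: "(\<And>i. i \<in> vars p \<Longrightarrow> v i = v' i) \<Longrightarrow> eval M v p = eval M v' p" by (induct p) auto
lemma eval_upd: "eval (M\<lparr>mcar := X\<rparr>) v p = eval M v p" by (induct p) auto

context
  fixes M :: "'a malg" assumes ma: "modal_algebra M"
begin

lemma ma_ax:
  "mbot M \<in> mcar M" "mtop M \<in> mcar M"
  "a \<in> mcar M \<Longrightarrow> b \<in> mcar M \<Longrightarrow> mjoin M a b \<in> mcar M"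
  "a \<in> mcar M \<Longrightarrow> b \<in> mcar M \<Longrightarrow> mmeet M a b \<in> mcar M"
  "a \<in> mcar M \<Longrightarrow> mcompl M a \<in> mcar M"
  "a \<in> mcar M \<Longrightarrow> mbox M a \<in> mcar M"
  "a \<in> mcar M \<Longrightarrow> b \<in> mcar M \<Longrightarrow> mjoin M a b = mjoin M b a"
  "a \<in> mcar M \<Longrightarrow> b \<in> mcar M \<Longrightarrow> mmeet M a b = mmeet M b a"
  "a \<in> mcar M \<Longrightarrow> b \<in> mcar M \<Longrightarrow> mjoin M a (mmeet M a b) = a"
  "a \<in> mcar M \<Longrightarrow> b \<in> mcar M \<Longrightarrow> mmeet M a (mjoin M a b) = a"
  "a \<in> mcar M \<Longrightarrow> b \<in> mcar M \<Longrightarrow> d \<in> mcar M \<Longrightarrow> mmeet M a (mjoin M b d) = mjoin M (mmeet M a b) (mmeet M a d)"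
  "a \<in> mcar M \<Longrightarrow> b \<in> mcar M \<Longrightarrow> d \<in> mcar M \<Longrightarrow> mjoin M a (mjoin M b d) = mjoin M (mjoin M a b) d"
  "a \<in> mcar M \<Longrightarrow> mjoin M a (mcompl M a) = mtop M"
  "a \<in> mcar M \<Longrightarrow> mmeet M a (mcompl M a) = mbot M"
  "mbox M (mtop M) = mtop M"
  using ma unfolding modal_algebra_def Let_def by blast+

lemma ma_meet_top: "a \<in> mcar M \<Longrightarrow> mmeet M a (mtop M) = a"
  using ma_ax(10)[of a "mcompl M a"] ma_ax(5,13) by simp

lemma ma_join_bot: "a \<in> mcar M \<Longrightarrow> mjoin M a (mbot M) = a"
  using ma_ax(9)[of a "mcompl M a"] ma_ax(5,14) by simp

lemma ma_join_idem: "a \<in> mcar M \<Longrightarrow> mjoin M a a = a"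
  using ma_ax(9)[of a "mjoin M a a"] ma_ax(10)[of a a] ma_ax(3) by simp

lemma ma_join_top: "a \<in> mcar M \<Longrightarrow> mjoin M a (mtop M) = mtop M"
proof -
  assume a: "a \<in> mcar M"
  have "mjoin M a (mtop M) = mjoin M a (mjoin M a (mcompl M a))" using ma_ax(13)[OF a] by simp
  also have "\<dots> = mjoin M (mjoin M a a) (mcompl M a)" using ma_ax(12) ma_ax(5) a by simp
  also have "\<dots> = mtop M" using ma_join_idem[OF a] ma_ax(13)[OF a] by simp
  finally show ?thesis .
qed

lemma ma_meet_eq_top: "a \<in> mcar M \<Longrightarrow> b \<in> mcar M \<Longrightarrow> mmeet M a b = mtop M \<Longrightarrow> a = mtop M"
  using ma_ax(9)[of a b] ma_join_top by simp

lemma ma_compl_top: "mcompl M (mtop M) = mbot M"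
  using ma_ax(14)[of "mtop M"] ma_ax(8)[of "mtop M" "mcompl M (mtop M)"] ma_meet_top[of "mcompl M (mtop M)"] ma_ax(2,5)
  by simp

lemma ma_compl_bot: "mcompl M (mbot M) = mtop M"
  using ma_ax(13)[of "mbot M"] ma_ax(7)[of "mbot M" "mcompl M (mbot M)"] ma_join_bot[of "mcompl M (mbot M)"] ma_ax(1,5)
  by simp

lemma ma_le: "p \<in> mcar M \<Longrightarrow> q \<in> mcar M \<Longrightarrow> mjoin M (mcompl M p) q = mtop M \<Longrightarrow> p = mmeet M p q"
proof -
  assume p: "p \<in> mcar M" and q: "q \<in> mcar M" and h: "mjoin M (mcompl M p) q = mtop M"
  have "p = mmeet M p (mjoin M (mcompl M p) q)" using h ma_meet_top[OF p] by simp
  also have "\<dots> = mjoin M (mmeet M p (mcompl M p)) (mmeet M p q)" using ma_ax(11,5) p q by simp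
  also have "\<dots> = mjoin M (mbot M) (mmeet M p q)" using ma_ax(14) p by simp
  also have "\<dots> = mmeet M p q"
    using ma_join_bot[of "mmeet M p q"] ma_ax(7)[of "mbot M" "mmeet M p q"] ma_ax(1) ma_ax(4)[OF p q] by simp
  finally show ?thesis .
qed

lemma ma_iff: "p \<in> mcar M \<Longrightarrow> q \<in> mcar M \<Longrightarrow>
   mmeet M (mjoin M (mcompl M p) q) (mjoin M (mcompl M q) p) = mtop M \<Longrightarrow> p = q"
proof -
  assume p: "p \<in> mcar M" and q: "q \<in> mcar M"
    and h: "mmeet M (mjoin M (mcompl M p) q) (mjoin M (mcompl M q) p) = mtop M"
  have h1: "mjoin M (mcompl M p) q = mtop M" using ma_meet_eq_top h ma_ax(3,5) p q by blast
  have h2: "mjoin M (mcompl M q) p = mtop M"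
    using ma_meet_eq_top[of "mjoin M (mcompl M q) p" "mjoin M (mcompl M p) q"] h ma_ax(3,5,8) p q by simp
  have "p = mmeet M p q" using ma_le[OF p q h1] .
  also have "\<dots> = mmeet M q p" using ma_ax(8) p q by simp
  also have "\<dots> = q" using ma_le[OF q p h2] by simp
  finally show ?thesis .
qed

lemma eval_in: "assign M v \<Longrightarrow> eval M v p \<in> mcar M"
  by (induct p) (auto simp: assign_def intro: ma_ax)

lemma eval_conjs_top: "(\<forall>g\<in>set l. eval M v g = mtop M) \<Longrightarrow> eval M v (conjs l) = mtop M"
  by (induct l) (auto simp: ma_compl_bot ma_meet_top ma_ax(2))

lemma eval_bxn_top: "eval M v g = mtop M \<Longrightarrow> eval M v (bxn j g) = mtop M"
  by (induct j) (auto simp: ma_ax(15))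

lemma eval_imp_iff: assumes v: "assign M v"
  and h: "eval M v (Imp X (Iff p q)) = mtop M" and X: "eval M v X = mtop M"
  shows "eval M v p = eval M v q"
proof -
  have "mjoin M (mbot M) (eval M v (Iff p q)) = mtop M" using h X ma_compl_top by (simp add: Imp_def)
  then have "eval M v (Iff p q) = mtop M"
    using ma_join_bot[of "eval M v (Iff p q)"] ma_ax(7)[of "mbot M" "eval M v (Iff p q)"] ma_ax(1) eval_in[OF v] by simp
  then show ?thesis using ma_iff eval_in[OF v] by (simp add: Iff_def Imp_def)
qed

end

context NL
begin

lemma sound_prov:
  assumes M: "in_VL L M" and v: "assign M v" and pr: "prov G (Iff p q)"
    and gG: "\<forall>g\<in>G. eval M v g = mtop M"
  shows "eval M v p = eval M v q"
proof -
  have ma: "modal_algebra M" using M unfolding in_VL_def by blast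
  obtain l where l: "set l \<subseteq> bcl G" "Imp (conjs l) (Iff p q) \<in> L" using pr unfolding prov_def by blast
  have "\<forall>g\<in>set l. eval M v g = mtop M"
  proof
    fix g assume "g \<in> set l"
    then obtain j g0 where "g = bxn j g0" "g0 \<in> G" using l(1) unfolding bcl_def by blast
    then show "eval M v g = mtop M" using eval_bxn_top[OF ma] gG by blast
  qed
  then have "eval M v (conjs l) = mtop M" using eval_conjs_top[OF ma] by blast
  moreover have "eval M v (Imp (conjs l) (Iff p q)) = mtop M" using M l(2) v unfolding in_VL_def by blast
  ultimately show ?thesis using eval_imp_iff[OF ma v] by blast
qed

end


context LAc
begin

lemma LA_ops:
  "mmeet LA a b = cls (And (from_nat a) (from_nat b))"
  "mjoin LA a b = cls (Or (from_nat a) (from_nat b))"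
  "mcompl LA a = cls (Neg (from_nat a))"
  "mbox LA a = cls (Box (from_nat a))"
  by (simp_all add: LA_def)

lemma eqv_rep: "prov G (Iff (rep P) P)" using rep_eqv' unfolding eqv_def .

lemma fn_meet: "prov G (Iff (from_nat (mmeet LA a b)) (And (from_nat a) (from_nat b)))"
  unfolding LA_ops from_cls by (rule eqv_rep)
lemma fn_join: "prov G (Iff (from_nat (mjoin LA a b)) (Or (from_nat a) (from_nat b)))"
  unfolding LA_ops from_cls by (rule eqv_rep)
lemma fn_compl: "prov G (Iff (from_nat (mcompl LA a)) (Neg (from_nat a)))"
  unfolding LA_ops from_cls by (rule eqv_rep)
lemma fn_bot: "prov G (Iff (from_nat (mbot LA)) Bot)"
  unfolding LA_simps from_cls by (rule eqv_rep)
lemma fn_top: "prov G (Iff (from_nat (mtop LA)) (Neg Bot))"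
  unfolding LA_simps from_cls by (rule eqv_rep)

lemmas LA_ax = ma_ax[OF modal_LA]

lemma car_ops:
  "a \<in> mcar LA \<Longrightarrow> b \<in> mcar LA \<Longrightarrow> mmeet LA a b \<in> mcar LA"
  "a \<in> mcar LA \<Longrightarrow> b \<in> mcar LA \<Longrightarrow> mjoin LA a b \<in> mcar LA"
  "a \<in> mcar LA \<Longrightarrow> mcompl LA a \<in> mcar LA"
  "a \<in> mcar LA \<Longrightarrow> mbox LA a \<in> mcar LA"
  "mbot LA \<in> mcar LA" "mtop LA \<in> mcar LA"
  by (fact LA_ax(4), fact LA_ax(3), fact LA_ax(5), fact LA_ax(6), fact LA_ax(1), fact LA_ax(2))

definition fcons :: "nat set \<Rightarrow> bool" where
  "fcons T \<longleftrightarrow> (\<forall>l. set l \<subseteq> T \<longrightarrow> \<not> prov G (Neg (conjs (map from_nat l))))"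

lemma uf_props: assumes "ultrafilter LA U" shows
  "U \<subseteq> mcar LA" "mtop LA \<in> U" "mbot LA \<notin> U" "a \<in> U \<Longrightarrow> b \<in> U \<Longrightarrow> mmeet LA a b \<in> U"
  "a \<in> U \<Longrightarrow> b \<in> mcar LA \<Longrightarrow> mmeet LA a b = a \<Longrightarrow> b \<in> U"
  "a \<in> mcar LA \<Longrightarrow> a \<in> U \<or> mcompl LA a \<in> U"
  using assms unfolding ultrafilter_def by blast+

lemma uf_conj_in: assumes U: "ultrafilter LA U" shows "set l \<subseteq> U \<Longrightarrow> cls (conjs (map from_nat l)) \<in> U"
proof (induct l)
  case Nil then show ?case using uf_props(2)[OF U] by simp
next
  case (Cons a l)
  then have a: "a \<in> U" "cls (conjs (map from_nat l)) \<in> U" by auto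
  have "mmeet LA a (cls (conjs (map from_nat l))) = cls (And (from_nat a) (rep (conjs (map from_nat l))))"
    unfolding LA_ops by simp
  also have "\<dots> = cls (conjs (map from_nat (a # l)))"
    by (simp, rule eqv_cls, rule eqv_And, rule eqv_refl, rule rep_eqv')
  finally have "cls (conjs (map from_nat (a # l))) = mmeet LA a (cls (conjs (map from_nat l)))" by simp
  then show ?case using uf_props(4)[OF U a(1) a(2)] by simp
qed

lemma uf_closed: assumes U: "ultrafilter LA U" and l: "set l \<subseteq> U" and b: "b \<in> mcar LA"
  and pr: "prov G (Imp (conjs (map from_nat l)) (from_nat b))"
  shows "b \<in> U"
proof -
  let ?X = "conjs (map from_nat l)"
  have z: "cls ?X \<in> U" using uf_conj_in[OF U l] .
  have "mmeet LA (cls ?X) b = mmeet LA (cls ?X) (cls (from_nat b))" using car_cls[OF b] by simp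
  also have "\<dots> = cls (And ?X (from_nat b))" by simp
  also have "\<dots> = cls ?X"
    by (rule eqv_cls) (unfold eqv_def, rule prov_taut1[OF pr], unfold pv_Imp pv_Iff pv.simps pv_conjs, blast)
  finally show ?thesis using uf_props(5)[OF U z b] by simp
qed

lemma uf_cons: assumes U: "ultrafilter LA U" and l: "set l \<subseteq> U"
  shows "\<not> prov G (Neg (conjs (map from_nat l)))"
proof
  assume h: "prov G (Neg (conjs (map from_nat l)))"
  have "prov G (Imp (conjs (map from_nat l)) (from_nat (mbot LA)))"
    by (rule prov_taut2[OF h fn_bot]) (unfold pv_Imp pv_Iff pv.simps, blast)
  then have "mbot LA \<in> U" using uf_closed[OF U l car_ops(5)] by blast
  then show False using uf_props(3)[OF U] by blast
qed

lemma uf_meet_iff: assumes U: "ultrafilter LA U" and a: "a \<in> mcar LA" and b: "b \<in> mcar LA"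
  shows "mmeet LA a b \<in> U \<longleftrightarrow> a \<in> U \<and> b \<in> U"
proof
  assume h: "mmeet LA a b \<in> U"
  have 1: "prov G (Imp (conjs (map from_nat [mmeet LA a b])) (from_nat a))"
    by (rule prov_taut1[OF fn_meet[of a b]]) (simp only: list.map conjs.simps pv_Imp pv_Iff pv.simps, blast)
  have 2: "prov G (Imp (conjs (map from_nat [mmeet LA a b])) (from_nat b))"
    by (rule prov_taut1[OF fn_meet[of a b]]) (simp only: list.map conjs.simps pv_Imp pv_Iff pv.simps, blast)
  have 3: "set [mmeet LA a b] \<subseteq> U" using h by simp
  show "a \<in> U \<and> b \<in> U" using uf_closed[OF U 3 a 1] uf_closed[OF U 3 b 2] by blast
qed (use uf_props(4)[OF U] in blast)

lemma uf_compl_iff: assumes U: "ultrafilter LA U" and a: "a \<in> mcar LA"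
  shows "mcompl LA a \<in> U \<longleftrightarrow> a \<notin> U"
proof
  assume h: "mcompl LA a \<in> U"
  show "a \<notin> U"
  proof
    assume "a \<in> U"
    then have "set [a, mcompl LA a] \<subseteq> U" using h by auto
    moreover have "prov G (Neg (conjs (map from_nat [a, mcompl LA a])))"
      by (rule prov_taut1[OF fn_compl[of a]]) (simp only: list.map conjs.simps pv_Imp pv_Iff pv.simps, blast)
    ultimately show False using uf_cons[OF U] by blast
  qed
qed (use uf_props(6)[OF U a] in blast)

lemma uf_join_iff: assumes U: "ultrafilter LA U" and a: "a \<in> mcar LA" and b: "b \<in> mcar LA"
  shows "mjoin LA a b \<in> U \<longleftrightarrow> a \<in> U \<or> b \<in> U"
proof
  assume h: "mjoin LA a b \<in> U"
  show "a \<in> U \<or> b \<in> U"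
  proof (rule ccontr)
    assume "\<not> (a \<in> U \<or> b \<in> U)"
    then have "set [mjoin LA a b, mcompl LA a, mcompl LA b] \<subseteq> U" using h uf_compl_iff[OF U] a b by auto
    moreover have "prov G (Neg (conjs (map from_nat [mjoin LA a b, mcompl LA a, mcompl LA b])))"
      by (rule prov_taut3[OF fn_join[of a b] fn_compl[of a] fn_compl[of b]]) (simp only: list.map conjs.simps pv_Imp pv_Iff pv.simps, blast)
    ultimately show False using uf_cons[OF U] by blast
  qed
next
  assume h: "a \<in> U \<or> b \<in> U"
  have 1: "prov G (Imp (conjs (map from_nat [a])) (from_nat (mjoin LA a b)))"
    by (rule prov_taut1[OF fn_join[of a b]]) (simp only: list.map conjs.simps pv_Imp pv_Iff pv.simps, blast)
  have 2: "prov G (Imp (conjs (map from_nat [b])) (from_nat (mjoin LA a b)))"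
    by (rule prov_taut1[OF fn_join[of a b]]) (simp only: list.map conjs.simps pv_Imp pv_Iff pv.simps, blast)
  show "mjoin LA a b \<in> U"
  proof (cases "a \<in> U")
    case True then show ?thesis using uf_closed[OF U _ car_ops(2)[OF a b] 1] by simp
  next
    case False then show ?thesis using h uf_closed[OF U _ car_ops(2)[OF a b] 2] by simp
  qed
qed

lemma uf_mono: assumes U: "ultrafilter LA U" and a: "a \<in> U" and b: "b \<in> mcar LA"
  and pr: "prov G (Imp (from_nat a) (from_nat b))" shows "b \<in> U"
proof -
  have 1: "set [a] \<subseteq> U" using a by simp
  have 2: "prov G (Imp (conjs (map from_nat [a])) (from_nat b))"
    by (rule prov_taut1[OF pr]) (simp only: list.map conjs.simps pv_Imp pv_Iff pv.simps, blast)
  show ?thesis using uf_closed[OF U 1 b 2] .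
qed

lemma fcons_bad: "fcons U \<Longrightarrow> set l \<subseteq> U \<Longrightarrow> prov G (Neg (conjs (map from_nat l))) \<Longrightarrow> False"
  unfolding fcons_def by blast

lemma fcons_single: assumes "\<not> prov G (Neg (from_nat x))" shows "fcons {x}"
  unfolding fcons_def
proof (intro allI impI notI)
  fix l assume l: "set l \<subseteq> {x}" and p: "prov G (Neg (conjs (map from_nat l)))"
  have "prov G (Neg (from_nat x))"
  proof (rule prov_taut1[OF p])
    fix V assume h: "pv V (Neg (conjs (map from_nat l)))"
    show "pv V (Neg (from_nat x))"
    proof (rule ccontr)
      assume "\<not> pv V (Neg (from_nat x))"
      then have "pv V (from_nat x)" by simp
      then have "\<forall>z\<in>set l. pv V (from_nat z)" using l by auto
      then show False using h by (simp only: pv.simps pv_conjs set_map ball_simps) blast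
    qed
  qed
  then show False using assms by blast
qed

lemma fcons_step: assumes T: "fcons T" and a: "a \<in> mcar LA" and n: "\<not> fcons (insert a T)"
  shows "fcons (insert (mcompl LA a) T)"
  unfolding fcons_def
proof (intro allI impI notI)
  fix l2 assume l2: "set l2 \<subseteq> insert (mcompl LA a) T" and p2: "prov G (Neg (conjs (map from_nat l2)))"
  obtain l1 where l1: "set l1 \<subseteq> insert a T" and p1: "prov G (Neg (conjs (map from_nat l1)))"
    using n unfolding fcons_def by blast
  let ?l = "filter (\<lambda>z. z \<in> T) (l1 @ l2)"
  have sl: "set ?l \<subseteq> T" by auto
  have "prov G (Neg (conjs (map from_nat ?l)))"
  proof (rule prov_taut3[OF p1 p2 fn_compl[of a]])
    fix V assume h1: "pv V (Neg (conjs (map from_nat l1)))" and h2: "pv V (Neg (conjs (map from_nat l2)))"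
      and h3: "pv V (Iff (from_nat (mcompl LA a)) (Neg (from_nat a)))"
    show "pv V (Neg (conjs (map from_nat ?l)))"
    proof (rule ccontr)
      assume "\<not> pv V (Neg (conjs (map from_nat ?l)))"
      then have all: "\<forall>z\<in>set ?l. pv V (from_nat z)" by (simp only: pv.simps pv_conjs set_map ball_simps not_not) blast
      from h1 obtain z1 where z1: "z1 \<in> set l1" "\<not> pv V (from_nat z1)"
        by (simp only: pv.simps pv_conjs set_map ball_simps) blast
      from h2 obtain z2 where z2: "z2 \<in> set l2" "\<not> pv V (from_nat z2)"
        by (simp only: pv.simps pv_conjs set_map ball_simps) blast
      have "z1 \<notin> T" using z1 all by auto
      then have "z1 = a" using z1(1) l1 by auto
      have "z2 \<notin> T" using z2 all by auto
      then have "z2 = mcompl LA a" using z2(1) l2 by auto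
      show False using z1 z2 h3 \<open>z1 = a\<close> \<open>z2 = mcompl LA a\<close> by simp
    qed
  qed
  then show False using fcons_bad[OF T sl] by blast
qed

primrec ext :: "nat set \<Rightarrow> nat \<Rightarrow> nat set" where
  "ext T 0 = T"
| "ext T (Suc n) = (if n \<in> mcar LA then (if fcons (insert n (ext T n)) then insert n (ext T n)
                      else insert (mcompl LA n) (ext T n)) else ext T n)"

lemma fcons_uf: assumes U: "U \<subseteq> mcar LA" and f: "fcons U" and c: "\<forall>a\<in>mcar LA. a \<in> U \<or> mcompl LA a \<in> U"
  shows "ultrafilter LA U"
proof -
  have top: "mtop LA \<in> U"
  proof (rule ccontr)
    assume "mtop LA \<notin> U"
    then have "set [mcompl LA (mtop LA)] \<subseteq> U" using c car_ops(6) by auto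
    moreover have "prov G (Neg (conjs (map from_nat [mcompl LA (mtop LA)])))"
      by (rule prov_taut2[OF fn_compl[of "mtop LA"] fn_top]) (simp only: list.map conjs.simps pv_Imp pv_Iff pv.simps, blast)
    ultimately show False using fcons_bad[OF f] by blast
  qed
  have bot: "mbot LA \<notin> U"
  proof
    assume "mbot LA \<in> U"
    then have "set [mbot LA] \<subseteq> U" by auto
    moreover have "prov G (Neg (conjs (map from_nat [mbot LA])))"
      by (rule prov_taut1[OF fn_bot]) (simp only: list.map conjs.simps pv_Imp pv_Iff pv.simps, blast)
    ultimately show False using fcons_bad[OF f] by blast
  qed
  have meet: "mmeet LA a b \<in> U" if ab: "a \<in> U" "b \<in> U" for a b
  proof (rule ccontr)
    assume "mmeet LA a b \<notin> U"
    moreover have "mmeet LA a b \<in> mcar LA" using ab U car_ops(1) by blast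
    ultimately have "mcompl LA (mmeet LA a b) \<in> U" using c by blast
    then have "set [a, b, mcompl LA (mmeet LA a b)] \<subseteq> U" using ab by auto
    moreover have "prov G (Neg (conjs (map from_nat [a, b, mcompl LA (mmeet LA a b)])))"
      by (rule prov_taut2[OF fn_compl[of "mmeet LA a b"] fn_meet[of a b]]) (simp only: list.map conjs.simps pv_Imp pv_Iff pv.simps, blast)
    ultimately show False using fcons_bad[OF f] by blast
  qed
  have up: "b \<in> U" if ab: "a \<in> U" "b \<in> mcar LA" "mmeet LA a b = a" for a b
  proof (rule ccontr)
    assume "b \<notin> U"
    then have "mcompl LA b \<in> U" using c ab by blast
    then have "set [a, mcompl LA b] \<subseteq> U" using ab by auto
    moreover have m: "prov G (Iff (from_nat a) (And (from_nat a) (from_nat b)))"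
      using fn_meet[of a b] ab(3) by simp
    have "prov G (Neg (conjs (map from_nat [a, mcompl LA b])))"
      by (rule prov_taut2[OF fn_compl[of b] m]) (simp only: list.map conjs.simps pv_Imp pv_Iff pv.simps, blast)
    ultimately show False using fcons_bad[OF f] by blast
  qed
  show ?thesis unfolding ultrafilter_def
    using U top bot meet up c by blast
qed

lemma uf_exists: assumes T: "T \<subseteq> mcar LA" "fcons T" shows "\<exists>U. ultrafilter LA U \<and> T \<subseteq> U"
proof -
  have e1: "fcons (ext T n)" for n
    by (induct n) (auto simp: T fcons_step)
  have e2: "ext T n \<subseteq> mcar LA" for n
    by (induct n) (auto simp: T car_ops(3))
  have e3: "ext T n \<subseteq> ext T (Suc n)" for n by auto
  have e4: "m \<le> n \<Longrightarrow> ext T m \<subseteq> ext T n" for m n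
    by (rule lift_Suc_mono_le[of "ext T"]) (use e3 in auto)
  define U where "U = (\<Union>n. ext T n)"
  have fin: "set l \<subseteq> U \<Longrightarrow> \<exists>n. set l \<subseteq> ext T n" for l
  proof (induct l)
    case Nil then show ?case by simp
  next
    case (Cons z l)
    then obtain n1 n2 where "z \<in> ext T n1" "set l \<subseteq> ext T n2" unfolding U_def by auto
    then have "set (z # l) \<subseteq> ext T (max n1 n2)" using e4[of n1 "max n1 n2"] e4[of n2 "max n1 n2"] by auto
    then show ?case by blast
  qed
  have fU: "fcons U" unfolding fcons_def
  proof (intro allI impI)
    fix l assume "set l \<subseteq> U"
    then obtain n where "set l \<subseteq> ext T n" using fin by blast
    then show "\<not> prov G (Neg (conjs (map from_nat l)))" using e1[of n] unfolding fcons_def by blast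
  qed
  have cU: "\<forall>a\<in>mcar LA. a \<in> U \<or> mcompl LA a \<in> U"
  proof
    fix a assume a: "a \<in> mcar LA"
    have "a \<in> ext T (Suc a) \<or> mcompl LA a \<in> ext T (Suc a)" using a by auto
    then show "a \<in> U \<or> mcompl LA a \<in> U" unfolding U_def by blast
  qed
  have "U \<subseteq> mcar LA" unfolding U_def using e2 by blast
  then have "ultrafilter LA U" using fcons_uf fU cU by blast
  moreover have "T \<subseteq> U" unfolding U_def using ext.simps(1)[of T] by blast
  ultimately show ?thesis by blast
qed

lemma emb_sub: "emb LA a \<subseteq> Uf LA" unfolding emb_def by blast

lemma Uf_iff: "U \<in> Uf LA \<longleftrightarrow> ultrafilter LA U" unfolding Uf_def by simp

lemma emb_meet: "a \<in> mcar LA \<Longrightarrow> b \<in> mcar LA \<Longrightarrow> emb LA (mmeet LA a b) = emb LA a \<inter> emb LA b"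
  unfolding emb_def Uf_iff using uf_meet_iff by blast

lemma emb_join: "a \<in> mcar LA \<Longrightarrow> b \<in> mcar LA \<Longrightarrow> emb LA (mjoin LA a b) = emb LA a \<union> emb LA b"
  unfolding emb_def Uf_iff using uf_join_iff by blast

lemma emb_compl: "a \<in> mcar LA \<Longrightarrow> emb LA (mcompl LA a) = Uf LA - emb LA a"
  unfolding emb_def Uf_iff using uf_compl_iff by (auto simp: Uf_iff)

lemma emb_bot: "emb LA (cls Bot) = {}"
  unfolding emb_def Uf_iff using uf_props(3)[unfolded LA_simps] by blast

lemma emb_top: "emb LA (cls (Neg Bot)) = Uf LA"
  unfolding emb_def using uf_props(2)[unfolded LA_simps] by (auto simp: Uf_iff)

lemma emb_inj: assumes a: "a \<in> mcar LA" and b: "b \<in> mcar LA" and e: "emb LA a = emb LA b" shows "a = b"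
proof (rule ccontr)
  assume ne: "a \<noteq> b"
  have "\<not> prov G (Iff (from_nat a) (from_nat b))"
  proof
    assume "prov G (Iff (from_nat a) (from_nat b))"
    then have "cls (from_nat a) = cls (from_nat b)" using eqv_cls unfolding eqv_def by blast
    then show False using ne car_cls[OF a] car_cls[OF b] by simp
  qed
  have key: "\<exists>x y. x \<in> mcar LA \<and> y \<in> mcar LA \<and> {x, y} = {a, b} \<and> \<not> prov G (Neg (from_nat (mmeet LA x (mcompl LA y))))"
  proof (rule ccontr)
    assume "\<not> ?thesis"
    then have h1: "prov G (Neg (from_nat (mmeet LA a (mcompl LA b))))"
      and h2: "prov G (Neg (from_nat (mmeet LA b (mcompl LA a))))" using a b by blast+
    let ?ps = "[Neg (from_nat (mmeet LA a (mcompl LA b))), Neg (from_nat (mmeet LA b (mcompl LA a))),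
          Iff (from_nat (mmeet LA a (mcompl LA b))) (And (from_nat a) (from_nat (mcompl LA b))),
          Iff (from_nat (mmeet LA b (mcompl LA a))) (And (from_nat b) (from_nat (mcompl LA a))),
          Iff (from_nat (mcompl LA a)) (Neg (from_nat a)), Iff (from_nat (mcompl LA b)) (Neg (from_nat b))]"
    have P: "\<forall>p\<in>set ?ps. prov G p" using h1 h2 fn_meet fn_compl by simp
    have "prov G (Iff (from_nat a) (from_nat b))"
    proof (rule prov_taut[OF P])
      fix V assume "\<forall>p\<in>set ?ps. pv V p"
      then show "pv V (Iff (from_nat a) (from_nat b))"
        by (simp only: list.set insert_iff empty_iff ball_simps simp_thms pv.simps pv_Iff) blast
    qed
    then show False using \<open>\<not> prov G (Iff (from_nat a) (from_nat b))\<close> by blast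
  qed
  then obtain x y where xy: "x \<in> mcar LA" "y \<in> mcar LA" "{x, y} = {a, b}" "\<not> prov G (Neg (from_nat (mmeet LA x (mcompl LA y))))"
    by blast
  have "x \<noteq> y" using xy(3) ne by auto
  have "emb LA x = emb LA y" using xy(3) e by (auto simp: doubleton_eq_iff)
  obtain U where U: "ultrafilter LA U" "{mmeet LA x (mcompl LA y)} \<subseteq> U"
    using uf_exists[OF _ fcons_single[OF xy(4)]] car_ops(1)[OF xy(1) car_ops(3)[OF xy(2)]] by blast
  then have "x \<in> U" "mcompl LA y \<in> U" using uf_meet_iff[OF U(1) xy(1) car_ops(3)[OF xy(2)]] by auto
  then have "x \<in> U" "y \<notin> U" using uf_compl_iff[OF U(1) xy(2)] by auto
  then show False using \<open>emb LA x = emb LA y\<close> U(1) unfolding emb_def Uf_iff by blast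
qed

lemma canext_simps[simp]:
  "mcar (canext A) = Pow (Uf A)" "mjoin (canext A) = (\<union>)" "mmeet (canext A) = (\<inter>)"
  "mcompl (canext A) = (\<lambda>X. Uf A - X)" "mbot (canext A) = {}" "mtop (canext A) = Uf A"
  "mbox (canext A) = (\<lambda>X. sigma_ext A {0} (\<lambda>a. mbox A (a 0)) (\<lambda>_. X))"
  unfolding canext_def by simp_all

lemma Union_setcompr2: "U \<in> \<Union>{F k o' | k o'. P k o'} \<longleftrightarrow> (\<exists>k o'. P k o' \<and> U \<in> F k o')" by blast
lemma Inter_setcompr: "U \<in> \<Inter>{F a | a. P a} \<longleftrightarrow> (\<forall>a. P a \<longrightarrow> U \<in> F a)" by blast

lemma sigma_ext_mem: "U \<in> sigma_ext A V f x \<longleftrightarrow> (\<exists>k o'. (\<forall>i\<in>V. closed_el A (k i) \<and> open_el A (o' i) \<and> k i \<subseteq> x i \<and> x i \<subseteq> o' i)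
   \<and> U \<in> Uf A \<and> (\<forall>a. assign A a \<and> (\<forall>i\<in>V. k i \<subseteq> emb A (a i) \<and> emb A (a i) \<subseteq> o' i) \<longrightarrow> U \<in> emb A (f a)))"
  unfolding sigma_ext_def Union_setcompr2 Int_iff Inter_setcompr by (rule refl)

lemma emb_box: assumes a: "a \<in> mcar LA" shows "mbox (canext LA) (emb LA a) = emb LA (mbox LA a)"
proof
  show "mbox (canext LA) (emb LA a) \<subseteq> emb LA (mbox LA a)"
  proof
    fix U assume "U \<in> mbox (canext LA) (emb LA a)"
    then obtain k o' where ko: "\<forall>i\<in>{0::nat}. closed_el LA (k i) \<and> open_el LA (o' i) \<and> k i \<subseteq> emb LA a \<and> emb LA a \<subseteq> o' i"
      and U: "\<forall>a'. assign LA a' \<and> (\<forall>i\<in>{0::nat}. k i \<subseteq> emb LA (a' i) \<and> emb LA (a' i) \<subseteq> o' i) \<longrightarrow> U \<in> emb LA (mbox LA (a' 0))"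
      unfolding canext_simps sigma_ext_mem by blast
    have "assign LA (\<lambda>_. a)" using a unfolding assign_def by blast
    then show "U \<in> emb LA (mbox LA a)" using U ko by auto
  qed
next
  show "emb LA (mbox LA a) \<subseteq> mbox (canext LA) (emb LA a)"
  proof
    fix U assume U: "U \<in> emb LA (mbox LA a)"
    define k :: "nat \<Rightarrow> nat set set" where "k = (\<lambda>_. emb LA a)"
    have cl: "closed_el LA (emb LA a)" unfolding closed_el_def using a emb_sub[of a]
      by (intro exI[of _ "{a}"]) auto
    have op: "open_el LA (emb LA a)" unfolding open_el_def using a
      by (intro exI[of _ "{a}"]) auto
    have 1: "\<forall>i\<in>{0::nat}. closed_el LA (k i) \<and> open_el LA (k i) \<and> k i \<subseteq> emb LA a \<and> emb LA a \<subseteq> k i"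
      unfolding k_def using cl op by blast
    have 2: "U \<in> Uf LA" using U emb_sub by blast
    have 3: "\<forall>a'. assign LA a' \<and> (\<forall>i\<in>{0::nat}. k i \<subseteq> emb LA (a' i) \<and> emb LA (a' i) \<subseteq> k i) \<longrightarrow> U \<in> emb LA (mbox LA (a' 0))"
    proof (intro allI impI)
      fix a' assume a': "assign LA a' \<and> (\<forall>i\<in>{0::nat}. k i \<subseteq> emb LA (a' i) \<and> emb LA (a' i) \<subseteq> k i)"
      then have "emb LA (a' 0) = emb LA a" "a' 0 \<in> mcar LA" unfolding k_def assign_def by auto
      then have "a' 0 = a" using emb_inj[OF _ a] by blast
      then show "U \<in> emb LA (mbox LA (a' 0))" using U by simp
    qed
    show "U \<in> mbox (canext LA) (emb LA a)"
      unfolding canext_simps sigma_ext_mem using 1 2 3 by blast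
  qed
qed

lemma emb_hom: assumes v: "assign LA v"
  shows "eval (canext LA) (\<lambda>i. emb LA (v i)) p = emb LA (eval LA v p)"
proof (induct p)
  case (Var n) then show ?case by simp
next
  case Bot then show ?case by (simp add: emb_bot)
next
  case (Neg p) then show ?case using emb_compl eval_in[OF modal_LA v] by simp
next
  case (And p q) then show ?case using emb_meet eval_in[OF modal_LA v] by simp
next
  case (Or p q) then show ?case using emb_join eval_in[OF modal_LA v] by simp
next
  case (Box p) then show ?case using emb_box eval_in[OF modal_LA v] by simp
qed

end


lemma subst1_simps[simp]:
  "subst1 x p (Var n) = (if n = x then p else Var n)"
  "subst1 x p Bot = Bot"
  "subst1 x p (Neg s) = Neg (subst1 x p s)"
  "subst1 x p (And s s') = And (subst1 x p s) (subst1 x p s')"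
  "subst1 x p (Or s s') = Or (subst1 x p s) (subst1 x p s')"
  "subst1 x p (Box s) = Box (subst1 x p s)"
  by (simp_all add: subst1_def)

context NL
begin

lemma pos_mono_aux:
  "(pos_only x t \<longrightarrow> (\<forall>p q. prov G (Imp p q) \<longrightarrow> prov G (Imp (subst1 x p t) (subst1 x q t)))) \<and>
   (neg_only x t \<longrightarrow> (\<forall>p q. prov G (Imp p q) \<longrightarrow> prov G (Imp (subst1 x q t) (subst1 x p t))))"
proof (induct t)
  case (Var n) then show ?case by (auto intro!: prov_taut0)
next
  case Bot then show ?case by (auto intro!: prov_taut0)
next
  case (Neg s)
  show ?case
  proof (intro conjI impI allI)
    fix p q assume "pos_only x (Neg s)" "prov G (Imp p q)"
    then have h: "prov G (Imp (subst1 x q s) (subst1 x p s))" using Neg by simp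
    show "prov G (Imp (subst1 x p (Neg s)) (subst1 x q (Neg s)))"
      unfolding subst1_simps by (rule prov_taut1[OF h]) (simp only: pv.simps pv_Imp, blast)
  next
    fix p q assume "neg_only x (Neg s)" "prov G (Imp p q)"
    then have h: "prov G (Imp (subst1 x p s) (subst1 x q s))" using Neg by simp
    show "prov G (Imp (subst1 x q (Neg s)) (subst1 x p (Neg s)))"
      unfolding subst1_simps by (rule prov_taut1[OF h]) (simp only: pv.simps pv_Imp, blast)
  qed
next
  case (And s s')
  show ?case
  proof (intro conjI impI allI)
    fix p q assume "pos_only x (And s s')" "prov G (Imp p q)"
    then have h: "prov G (Imp (subst1 x p s) (subst1 x q s))" "prov G (Imp (subst1 x p s') (subst1 x q s'))" using And by simp_all
    show "prov G (Imp (subst1 x p (And s s')) (subst1 x q (And s s')))"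
      unfolding subst1_simps by (rule prov_taut2[OF h]) (simp only: pv.simps pv_Imp, blast)
  next
    fix p q assume "neg_only x (And s s')" "prov G (Imp p q)"
    then have h: "prov G (Imp (subst1 x q s) (subst1 x p s))" "prov G (Imp (subst1 x q s') (subst1 x p s'))" using And by simp_all
    show "prov G (Imp (subst1 x q (And s s')) (subst1 x p (And s s')))"
      unfolding subst1_simps by (rule prov_taut2[OF h]) (simp only: pv.simps pv_Imp, blast)
  qed
next
  case (Or s s')
  show ?case
  proof (intro conjI impI allI)
    fix p q assume "pos_only x (Or s s')" "prov G (Imp p q)"
    then have h: "prov G (Imp (subst1 x p s) (subst1 x q s))" "prov G (Imp (subst1 x p s') (subst1 x q s'))" using Or by simp_all
    show "prov G (Imp (subst1 x p (Or s s')) (subst1 x q (Or s s')))"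
      unfolding subst1_simps by (rule prov_taut2[OF h]) (simp only: pv.simps pv_Imp, blast)
  next
    fix p q assume "neg_only x (Or s s')" "prov G (Imp p q)"
    then have h: "prov G (Imp (subst1 x q s) (subst1 x p s))" "prov G (Imp (subst1 x q s') (subst1 x p s'))" using Or by simp_all
    show "prov G (Imp (subst1 x q (Or s s')) (subst1 x p (Or s s')))"
      unfolding subst1_simps by (rule prov_taut2[OF h]) (simp only: pv.simps pv_Imp, blast)
  qed
next
  case (Box s)
  show ?case
  proof (intro conjI impI allI)
    fix p q assume "pos_only x (Box s)" "prov G (Imp p q)"
    then have h: "prov G (Imp (subst1 x p s) (subst1 x q s))" using Box by simp
    show "prov G (Imp (subst1 x p (Box s)) (subst1 x q (Box s)))"
      unfolding subst1_simps by (rule prov_boxmono[OF h])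
  next
    fix p q assume "neg_only x (Box s)" "prov G (Imp p q)"
    then have h: "prov G (Imp (subst1 x q s) (subst1 x p s))" using Box by simp
    show "prov G (Imp (subst1 x q (Box s)) (subst1 x p (Box s)))"
      unfolding subst1_simps by (rule prov_boxmono[OF h])
  qed
qed

lemma pos_mono: "pos_only x t \<Longrightarrow> prov G (Imp p q) \<Longrightarrow> prov G (Imp (subst1 x p t) (subst1 x q t))"
  using pos_mono_aux by blast

end

context LAc
begin

lemma compact_chain:
  fixes E :: "nat \<Rightarrow> form"
  assumes E: "\<And>K. vars (E K) \<subseteq> {..<N}" and mono: "\<And>K K'. K \<le> K' \<Longrightarrow> prov G (Imp (E K) (E K'))"
    and k: "closed_el LA k" and sub: "k \<subseteq> (\<Union>K. emb LA (cls (E K)))"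
  shows "\<exists>K. k \<subseteq> emb LA (cls (E K))"
proof (rule ccontr)
  assume nt: "\<not> ?thesis"
  obtain S where S: "S \<subseteq> mcar LA" "k = Uf LA \<inter> \<Inter>(emb LA ` S)" using k unfolding closed_el_def by blast
  have bad: "\<exists>U\<in>k. cls (E K) \<notin> U" for K
  proof -
    from nt have "\<not> k \<subseteq> emb LA (cls (E K))" by blast
    then obtain U where "U \<in> k" "U \<notin> emb LA (cls (E K))" by blast
    moreover then have "U \<in> Uf LA" using S(2) by blast
    ultimately show ?thesis unfolding emb_def by blast
  qed
  define T where "T = S \<union> range (\<lambda>K. cls (Neg (E K)))"
  have TC: "T \<subseteq> mcar LA" unfolding T_def using S(1) cls_in E by auto
  have fin: "set l \<subseteq> T \<Longrightarrow> \<exists>K'. \<forall>z\<in>set l. z \<in> S \<or> (\<exists>K\<le>K'. z = cls (Neg (E K)))" for l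
  proof (induct l)
    case Nil then show ?case by simp
  next
    case (Cons z l)
    then obtain K1 where K1: "\<forall>z\<in>set l. z \<in> S \<or> (\<exists>K\<le>K1. z = cls (Neg (E K)))" by auto
    have "z \<in> T" using Cons by simp
    then obtain K2 where K2: "z \<in> S \<or> z = cls (Neg (E K2))" unfolding T_def by blast
    have "\<forall>z'\<in>set (z # l). z' \<in> S \<or> (\<exists>K\<le>max K1 K2. z' = cls (Neg (E K)))"
    proof
      fix z' assume "z' \<in> set (z # l)"
      then have "z' = z \<or> z' \<in> set l" by simp
      then show "z' \<in> S \<or> (\<exists>K\<le>max K1 K2. z' = cls (Neg (E K)))"
      proof
        assume "z' = z"
        moreover have "K2 \<le> max K1 K2" by simp
        ultimately show ?thesis using K2 by blast
      next
        assume "z' \<in> set l"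
        then have "z' \<in> S \<or> (\<exists>K\<le>K1. z' = cls (Neg (E K)))" using K1 by blast
        moreover have "K1 \<le> max K1 K2" by simp
        ultimately show ?thesis using le_trans by blast
      qed
    qed
    then show ?case by blast
  qed
  have fT: "fcons T" unfolding fcons_def
  proof (intro allI impI)
    fix l assume l: "set l \<subseteq> T"
    obtain K' where K': "\<forall>z\<in>set l. z \<in> S \<or> (\<exists>K\<le>K'. z = cls (Neg (E K)))" using fin[OF l] by blast
    obtain U where U: "U \<in> k" "cls (E K') \<notin> U" using bad by blast
    have "U \<in> Uf LA" using U(1) S(2) by blast
    then have Uu: "ultrafilter LA U" using Uf_iff by blast
    have "set l \<subseteq> U"
    proof
      fix z assume "z \<in> set l"
      then have "z \<in> S \<or> (\<exists>K\<le>K'. z = cls (Neg (E K)))" using K' by blast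
      then show "z \<in> U"
      proof
        assume "z \<in> S"
        then have "U \<in> emb LA z" using U(1) S(2) by blast
        then show ?thesis unfolding emb_def by blast
      next
        assume "\<exists>K\<le>K'. z = cls (Neg (E K))"
        then obtain K where K: "K \<le> K'" "z = cls (Neg (E K))" by blast
        have "cls (E K) \<notin> U"
        proof
          assume h: "cls (E K) \<in> U"
          have "prov G (Imp (from_nat (cls (E K))) (from_nat (cls (E K'))))"
            unfolding from_cls
            by (rule prov_taut3[OF eqv_rep[of "E K"] eqv_rep[of "E K'"] mono[OF K(1)]]) (unfold pv_Imp pv_Iff, blast)
          then have "cls (E K') \<in> U" using uf_mono[OF Uu h cls_in[OF E]] by blast
          then show False using U(2) by blast
        qed
        then have "mcompl LA (cls (E K)) \<in> U" using uf_compl_iff[OF Uu cls_in[OF E]] by blast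
        then show "z \<in> U" using K by simp
      qed
    qed
    then show "\<not> prov G (Neg (conjs (map from_nat l)))" using uf_cons[OF Uu] by blast
  qed
  obtain U0 where U0: "ultrafilter LA U0" "T \<subseteq> U0" using uf_exists[OF TC fT] by blast
  have "U0 \<in> Uf LA" using U0(1) Uf_iff by blast
  moreover have "\<forall>s\<in>S. U0 \<in> emb LA s"
  proof
    fix s assume "s \<in> S"
    then have "s \<in> U0" using U0(2) unfolding T_def by blast
    then show "U0 \<in> emb LA s" using \<open>U0 \<in> Uf LA\<close> unfolding emb_def by blast
  qed
  ultimately have "U0 \<in> k" unfolding S(2) by blast
  then obtain K where "U0 \<in> emb LA (cls (E K))" using sub by blast
  then have "cls (E K) \<in> U0" unfolding emb_def by blast
  moreover have "mcompl LA (cls (E K)) \<in> U0" using U0(2) unfolding T_def by auto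
  ultimately show False using uf_compl_iff[OF U0(1) cls_in[OF E]] by blast
qed

end


lemma finite_vars: "finite (vars p)" by (induct p) auto

lemma finite_range_bound: "finite G0 \<Longrightarrow> G0 \<subseteq> range (f :: nat \<Rightarrow> 'a) \<Longrightarrow> \<exists>K. G0 \<subseteq> f ` {..K}"
proof (induct G0 rule: finite_induct)
  case empty then show ?case by simp
next
  case (insert g G0)
  then obtain K where K: "G0 \<subseteq> f ` {..K}" by blast
  obtain k where k: "g = f k" using insert(4) by blast
  have "G0 \<subseteq> f ` {..max K k}" using K by auto
  moreover have "g \<in> f ` {..max K k}" using k by auto
  ultimately show ?case by blast
qed

locale MS = NL +
  fixes x :: nat and t :: form
begin

abbreviation I :: "nat \<Rightarrow> form" where "I k \<equiv> iter x (tplus x t) k"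

definition M0 :: nat where "M0 = Suc (Max (insert x (vars t)))"
definition w :: nat where "w = M0"
definition y :: nat where "y = Suc M0"
definition NN :: nat where "NN = Suc (Suc M0)"

definition dlt :: form where
  "dlt = And (Imp (Var w) (Var y)) (And (Imp (Var x) (Neg (Var y))) (Imp (subst1 x (Neg (Var y)) t) (Neg (Var y))))"

definition Sig :: "form set" where "Sig = range (\<lambda>k. Neg (And (Var w) (I k)))"
definition SK :: "nat \<Rightarrow> form set" where "SK K = (\<lambda>k. Neg (And (Var w) (I k))) ` {..K}"

definition Vp :: "nat set" where "Vp = {..<NN} - {y}"

lemma I_Suc: "I (Suc k) = Or (I k) (subst1 x (I k) t)"
  by (simp add: tplus_def)

lemma vars_t_lt: "i \<in> insert x (vars t) \<Longrightarrow> i < M0"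
  unfolding M0_def using finite_vars[of t] by (simp add: le_imp_less_Suc)

lemma vars_subst1: "vars (subst1 x p s) \<subseteq> vars p \<union> vars s"
  unfolding subst1_def vars_subst by (auto split: if_splits)

lemma vars_I: "vars (I k) \<subseteq> insert x (vars t)"
proof (induct k)
  case 0 then show ?case by simp
next
  case (Suc k) then show ?case using vars_subst1[of "I k" t] unfolding I_Suc by auto
qed

lemma vars_I_lt: "i \<in> vars (I k) \<Longrightarrow> i < M0"
  using vars_I vars_t_lt by blast

lemma w_notin: "w \<notin> vars (I k)" "w \<notin> vars t" "y \<notin> vars (I k)" "y \<notin> vars t" "x \<noteq> y" "x \<noteq> w" "w \<noteq> y"
  using vars_I_lt[of w k] vars_I_lt[of y k] vars_t_lt[of w] vars_t_lt[of y] vars_t_lt[of x]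
  unfolding w_def y_def by auto

lemma vars_I_N: "vars (I k) \<subseteq> {..<NN}" using vars_I_lt unfolding NN_def by fastforce
lemma vars_I_Vp: "vars (I k) \<subseteq> Vp" using vars_I_lt w_notin(3) unfolding NN_def Vp_def by fastforce
lemma vars_t_N: "vars t \<subseteq> {..<NN}" using vars_t_lt unfolding NN_def by fastforce
lemma x_N: "x < NN" "w < NN" "y < NN" "x \<in> Vp" "w \<in> Vp"
  using vars_t_lt[of x] w_notin unfolding NN_def w_def y_def Vp_def by auto

lemma vars_dlt: "vars dlt \<subseteq> {..<NN}"
  unfolding dlt_def using x_N vars_subst1[of "Neg (Var y)" t] vars_t_N by auto

lemma I_mono: "K \<le> K' \<Longrightarrow> Imp (I K) (I K') \<in> L"
proof (induct K' rule: dec_induct)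
  case base then show ?case by (rule L_pv) simp
next
  case (step n)
  show ?case by (rule L_taut1[OF step(3)]) (unfold I_Suc pv_Imp pv.simps, blast)
qed

lemma dlt_cons: "pos_only x t \<Longrightarrow> prov {dlt} (Imp (I k) (Neg (Var y)))"
proof (induct k)
  case 0
  show ?case by (rule prov_taut1[OF prov_G[OF singletonI[of dlt]]]) (auto simp: dlt_def)
next
  case (Suc k)
  have h: "prov {dlt} (Imp (subst1 x (I k) t) (subst1 x (Neg (Var y)) t))"
    by (rule pos_mono[OF Suc(2) Suc(1)[OF Suc(2)]])
  show ?case unfolding I_Suc
    by (rule prov_taut3[OF h Suc(1)[OF Suc(2)] prov_G[OF singletonI[of dlt]]]) (unfold dlt_def pv_Imp pv.simps, meson)
qed

lemma KC:
  assumes cc: "countably_canonical L" and st: "stable t"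
    and pq: "vars p \<subseteq> Vp" "vars q \<subseteq> Vp"
    and pr: "prov {dlt} (Iff p q)"
  shows "\<exists>K. prov (SK K) (Iff p q)"
proof -
  interpret C: LAc L NN Sig by unfold_locales
  define c0 where "c0 = C.gv"
  define Uf0 where "Uf0 = Uf C.LA"
  define e where "e K = C.cls (I K)" for K
  define aw where "aw = (\<Union>K. emb C.LA (e K))"
  have e_in: "e K \<in> mcar C.LA" for K unfolding e_def by (rule C.cls_in[OF vars_I_N])
  have aw_sub: "aw \<subseteq> Uf0" unfolding aw_def Uf0_def using C.emb_sub by blast
  have cinVL: "in_VL L (canext C.LA)" by (rule cc[unfolded countably_canonical_def, rule_format, OF C.in_VL_LA])
  have c0_assign: "assign C.LA c0" unfolding c0_def by (rule C.assign_gv)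
  have c0_var: "i < NN \<Longrightarrow> c0 i = C.cls (Var i)" for i unfolding c0_def C.gv_def by simp
  define c' where "c' i = (if i = y then Uf0 - aw else emb C.LA (c0 i))" for i
  have emb_sub0: "emb C.LA a \<subseteq> Uf0" for a unfolding Uf0_def by (rule C.emb_sub)
  have c'_assign: "assign (canext C.LA) c'" unfolding assign_def
  proof
    fix i show "c' i \<in> mcar (canext C.LA)" using emb_sub0[of "c0 i"] unfolding c'_def Uf0_def by auto
  qed
  have ew: "emb C.LA (c0 w) \<inter> aw = {}"
  proof -
    have "emb C.LA (C.cls (Var w)) \<inter> emb C.LA (e K) = {}" for K
    proof -
      have 1: "C.cls (Var w) \<in> mcar C.LA" by (rule C.cls_in) (use x_N in simp)
      have "emb C.LA (C.cls (Var w)) \<inter> emb C.LA (e K) = emb C.LA (mmeet C.LA (C.cls (Var w)) (e K))"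
        using C.emb_meet[OF 1 e_in] by simp
      also have "\<dots> = emb C.LA (C.cls (And (Var w) (I K)))" unfolding e_def by simp
      also have "\<dots> = emb C.LA (C.cls Bot)"
      proof -
        have "Neg (And (Var w) (I K)) \<in> Sig" unfolding Sig_def by blast
        then have "prov Sig (Iff (And (Var w) (I K)) Bot)"
          by (rule prov_taut1[OF prov_G]) simp
        then show ?thesis using C.eqv_cls unfolding C.eqv_def by simp
      qed
      also have "\<dots> = {}" by (rule C.emb_bot)
      finally show ?thesis .
    qed
    then show ?thesis unfolding aw_def c0_var[OF x_N(2)] by (simp add: Int_UN_distrib)
  qed
  have ex: "emb C.LA (c0 x) \<subseteq> aw"
    unfolding aw_def e_def using c0_var[OF x_N(1)] by (auto intro!: exI[of _ 0])
  define X' where "X' i = (if i = x then aw else emb C.LA (c0 i))" for i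
  have X'_assign: "assign (canext C.LA) X'" unfolding assign_def
  proof
    fix i show "X' i \<in> mcar (canext C.LA)" using emb_sub0[of "c0 i"] aw_sub unfolding X'_def Uf0_def by auto
  qed
  have sig_sub: "sigma_ext C.LA (vars t) (\<lambda>a. eval C.LA a t) X' \<subseteq> aw"
  proof
    fix U assume "U \<in> sigma_ext C.LA (vars t) (\<lambda>a. eval C.LA a t) X'"
    then obtain k o' where ko: "\<forall>i\<in>vars t. closed_el C.LA (k i) \<and> open_el C.LA (o' i) \<and> k i \<subseteq> X' i \<and> X' i \<subseteq> o' i"
      and UU: "U \<in> Uf C.LA"
      and H: "\<forall>a. assign C.LA a \<and> (\<forall>i\<in>vars t. k i \<subseteq> emb C.LA (a i) \<and> emb C.LA (a i) \<subseteq> o' i) \<longrightarrow> U \<in> emb C.LA (eval C.LA a t)"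
      unfolding C.sigma_ext_mem by blast
    obtain K where K: "x \<in> vars t \<longrightarrow> k x \<subseteq> emb C.LA (e K)"
    proof (cases "x \<in> vars t")
      case True
      have m: "K \<le> K' \<Longrightarrow> prov Sig (Imp (I K) (I K'))" for K K' by (rule prov_L[OF I_mono])
      have kx: "closed_el C.LA (k x)" "k x \<subseteq> X' x" using ko True by auto
      then have "closed_el C.LA (k x)" "k x \<subseteq> (\<Union>K. emb C.LA (C.cls (I K)))"
        unfolding X'_def aw_def e_def by simp_all
      then obtain K where "k x \<subseteq> emb C.LA (C.cls (I K))" using C.compact_chain[of I, OF vars_I_N m] by blast
      then show ?thesis using that unfolding e_def by blast
    next
      case False then show ?thesis using that by blast
    qed
    define a where "a = c0(x := e K)"
    have a_assign: "assign C.LA a" using c0_assign e_in unfolding a_def assign_def by auto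
    have "\<forall>i\<in>vars t. k i \<subseteq> emb C.LA (a i) \<and> emb C.LA (a i) \<subseteq> o' i"
    proof
      fix i assume i: "i \<in> vars t"
      show "k i \<subseteq> emb C.LA (a i) \<and> emb C.LA (a i) \<subseteq> o' i"
      proof (cases "i = x")
        case True
        have 1: "emb C.LA (e K) \<subseteq> aw" unfolding aw_def by blast
        have 2: "k x \<subseteq> X' x" "X' x \<subseteq> o' x" using ko i True by auto
        have 3: "X' x = aw" unfolding X'_def by simp
        have 4: "k x \<subseteq> emb C.LA (e K)" using K i True by blast
        show ?thesis using 1 2 3 4 True unfolding a_def by auto
      next
        case False
        have 2: "k i \<subseteq> X' i" "X' i \<subseteq> o' i" using ko i by auto
        have 3: "X' i = emb C.LA (c0 i)" "a i = c0 i" unfolding X'_def a_def using False by auto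
        show ?thesis using 2 3 by simp
      qed
    qed
    then have U1: "U \<in> emb C.LA (eval C.LA a t)" using H a_assign by blast
    have "eval C.LA a t = C.cls (subst (\<lambda>i. from_nat (a i)) t)" by (rule C.eval_LA[OF a_assign])
    also have "\<dots> = C.cls (subst1 x (I K) t)" unfolding subst1_def
    proof (rule C.eqv_cls, rule C.eqv_subst)
      fix i assume i: "i \<in> vars t"
      show "C.eqv (from_nat (a i)) (if i = x then I K else Var i)"
      proof (cases "i = x")
        case True then show ?thesis unfolding a_def e_def by (simp add: C.rep_eqv')
      next
        case False
        have "i < NN" using i vars_t_N by blast
        then show ?thesis using False unfolding a_def by (simp add: c0_var C.rep_eqv')
      qed
    qed
    finally have U2: "U \<in> emb C.LA (C.cls (subst1 x (I K) t))" using U1 by simp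
    have Uu: "ultrafilter C.LA U" using UU C.Uf_iff by blast
    have "prov Sig (Imp (from_nat (C.cls (subst1 x (I K) t))) (from_nat (e (Suc K))))"
      unfolding e_def C.from_cls
      by (rule prov_taut2[OF C.eqv_rep[of "subst1 x (I K) t"] C.eqv_rep[of "I (Suc K)"]]) (unfold I_Suc pv_Imp pv_Iff pv.simps, blast)
    then have "e (Suc K) \<in> U" using C.uf_mono[OF Uu _ e_in] U2 unfolding emb_def by blast
    then have "U \<in> emb C.LA (e (Suc K))" using UU unfolding emb_def by blast
    then show "U \<in> aw" unfolding aw_def by blast
  qed
  have st_eq: "sigma_ext C.LA (vars t) (\<lambda>a. eval C.LA a t) X' = eval (canext C.LA) X' t"
    using st C.modal_LA X'_assign unfolding stable_def by blast
  have ev_t: "eval (canext C.LA) c' (subst1 x (Neg (Var y)) t) = eval (canext C.LA) X' t"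
    unfolding subst1_def eval_subst
  proof (rule eval_cong)
    fix i assume i: "i \<in> vars t"
    show "eval (canext C.LA) c' (if i = x then Neg (Var y) else Var i) = X' i"
    proof (cases "i = x")
      case True then show ?thesis using aw_sub unfolding c'_def X'_def Uf0_def by auto
    next
      case False
      have "i \<noteq> y" using i w_notin(4) by blast
      then show ?thesis using False unfolding c'_def X'_def by simp
    qed
  qed
  have evt_sub: "eval (canext C.LA) X' t \<subseteq> aw" using sig_sub st_eq by simp
  have cw: "c' w = emb C.LA (c0 w)" "c' x = emb C.LA (c0 x)" "c' y = Uf0 - aw"
    unfolding c'_def using w_notin by auto
  have dlt_top: "eval (canext C.LA) c' dlt = mtop (canext C.LA)"
  proof -
    have "eval (canext C.LA) c' dlt = ((Uf0 - emb C.LA (c0 w)) \<union> (Uf0 - aw)) \<inter>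
        (((Uf0 - emb C.LA (c0 x)) \<union> (Uf0 - (Uf0 - aw))) \<inter>
        ((Uf0 - eval (canext C.LA) X' t) \<union> (Uf0 - (Uf0 - aw))))"
      unfolding dlt_def Imp_def by (simp add: cw ev_t Uf0_def[symmetric])
    also have "\<dots> = Uf0" using ew ex evt_sub aw_sub by blast
    finally show ?thesis unfolding Uf0_def by simp
  qed
  have sound: "eval (canext C.LA) c' p = eval (canext C.LA) c' q"
    by (rule sound_prov[OF cinVL c'_assign pr]) (use dlt_top in simp)
  have ev_p: "eval (canext C.LA) c' r = emb C.LA (C.cls r)" if r: "vars r \<subseteq> Vp" for r
  proof -
    have "eval (canext C.LA) c' r = eval (canext C.LA) (\<lambda>i. emb C.LA (c0 i)) r"
      by (rule eval_cong) (use r in \<open>auto simp: c'_def Vp_def\<close>)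
    also have "\<dots> = emb C.LA (eval C.LA c0 r)" by (rule C.emb_hom[OF c0_assign])
    also have "\<dots> = emb C.LA (C.cls r)" unfolding c0_def using r unfolding Vp_def
      by (subst C.eval_gv) auto
    finally show ?thesis .
  qed
  have "emb C.LA (C.cls p) = emb C.LA (C.cls q)" using sound ev_p pq by simp
  moreover have "C.cls p \<in> mcar C.LA" "C.cls q \<in> mcar C.LA"
    using pq unfolding Vp_def by (auto intro!: C.cls_in)
  ultimately have "C.cls p = C.cls q" using C.emb_inj by blast
  then have "prov Sig (Iff p q)" using C.cls_eq unfolding C.eqv_def by blast
  then obtain G0 where G0: "finite G0" "G0 \<subseteq> Sig" "prov G0 (Iff p q)" using prov_finite by blast
  then obtain K where "G0 \<subseteq> SK K" using finite_range_bound[OF G0(1)] unfolding Sig_def SK_def by blast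
  then show ?thesis using prov_mono G0(3) by blast
qed

end


context MS
begin

lemma SK_mono: "K \<le> K' \<Longrightarrow> SK K \<subseteq> SK K'" unfolding SK_def by auto

lemma subst_phi_I: "subst (\<lambda>j. if j = w then P else Var j) (I k) = I k"
proof -
  have "subst (\<lambda>j. if j = w then P else Var j) (I k) = subst Var (I k)"
    by (rule subst_cong) (use w_notin(1) in auto)
  then show ?thesis by (simp add: subst_Var)
qed

lemma Vp_fin: "finite Vp" unfolding Vp_def by simp
lemma Vp_N: "Vp \<subseteq> {..<NN}" unfolding Vp_def by auto

lemma main:
  assumes coh: "coherent L" and cc: "countably_canonical L" and st: "stable t" and pos: "pos_only x t"
  shows "\<exists>n. Iff (I n) (I (Suc n)) \<in> L"
proof -
  interpret A: LAc L NN "{dlt}" by unfold_locales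
  interpret F: LAc L NN "{}" by unfold_locales
  have KC': "\<exists>K. prov (SK K) (Iff p q)" if "vars p \<subseteq> Vp" "vars q \<subseteq> Vp" "A.cls p = A.cls q" for p q
    using KC[OF cc st that(1,2)] that(3) A.cls_eq unfolding A.eqv_def by blast
  have Afp: "fin_pres L A.LA"
    unfolding fin_pres_def
  proof (intro conjI A.in_VL_LA exI[of _ NN] exI[of _ A.gv] exI[of _ "{(dlt, Neg Bot)}"])
    show "assign A.LA A.gv" by (rule A.assign_gv)
    show "finite {(dlt, Neg Bot)}" by simp
    show "\<forall>(s, u)\<in>{(dlt, Neg Bot)}. vars s \<subseteq> {..<NN} \<and> vars u \<subseteq> {..<NN}" using vars_dlt by simp
    show "mcar A.LA = {eval A.LA A.gv p |p. vars p \<subseteq> {..<NN}}"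
      unfolding A.LA_car
    proof (rule Collect_cong)
      fix z show "(\<exists>p. z = A.cls p \<and> vars p \<subseteq> {..<NN}) = (\<exists>p. z = eval A.LA A.gv p \<and> vars p \<subseteq> {..<NN})"
        using A.eval_gv by metis
    qed
    have "A.cls dlt = A.cls (Neg Bot)"
      by (rule A.eqv_cls, unfold A.eqv_def, rule prov_taut1[OF prov_G[OF singletonI]]) simp
    then show "\<forall>(s, u)\<in>{(dlt, Neg Bot)}. eval A.LA A.gv s = eval A.LA A.gv u"
      using A.eval_gv[OF vars_dlt] A.eval_gv[of "Neg Bot"] by simp
    show "\<forall>p q. vars p \<subseteq> {..<NN} \<longrightarrow> vars q \<subseteq> {..<NN} \<longrightarrow> eval A.LA A.gv p = eval A.LA A.gv q \<longrightarrow>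
          (\<forall>(B :: nat malg) b. in_VL L B \<longrightarrow> assign B b \<longrightarrow>
              (\<forall>(s,u)\<in>{(dlt, Neg Bot)}. eval B b s = eval B b u) \<longrightarrow> eval B b p = eval B b q)"
    proof (intro allI impI)
      fix p q and B :: "nat malg" and b
      assume p: "vars p \<subseteq> {..<NN}" and q: "vars q \<subseteq> {..<NN}" and e: "eval A.LA A.gv p = eval A.LA A.gv q"
        and B: "in_VL L B" and b: "assign B b" and E: "\<forall>(s,u)\<in>{(dlt, Neg Bot)}. eval B b s = eval B b u"
      have "A.cls p = A.cls q" using e A.eval_gv p q by simp
      then have pr: "prov {dlt} (Iff p q)" using A.cls_eq unfolding A.eqv_def by blast
      have maB: "modal_algebra B" using B unfolding in_VL_def by blast
      have "eval B b dlt = mtop B" using E ma_compl_bot[OF maB] by simp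
      then show "eval B b p = eval B b q" using sound_prov[OF B b pr] by simp
    qed
  qed
  define Gs where "Gs = A.gv ` Vp"
  have Gs_fin: "finite Gs" unfolding Gs_def using Vp_fin by simp
  have Gs_sub: "Gs \<subseteq> mcar A.LA" unfolding Gs_def using A.assign_gv unfolding assign_def by blast
  define B where "B = A.LA\<lparr>mcar := gen A.LA Gs\<rparr>"
  have Bfp: "fin_pres L B" unfolding B_def
    by (rule coh[unfolded coherent_def, rule_format, OF Afp Gs_fin Gs_sub])
  have carB: "mcar B = gen A.LA Gs" unfolding B_def by simp
  have evB: "eval B v P = eval A.LA v P" for v P unfolding B_def by (rule eval_upd)
  obtain n a E where aB: "assign B a" and fE: "finite E"
    and cB: "mcar B = {eval B a p | p. vars p \<subseteq> {..<n}}"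
    and Eh: "\<forall>(s,u)\<in>E. eval B a s = eval B a u"
    and cons: "\<forall>p q. vars p \<subseteq> {..<n} \<longrightarrow> vars q \<subseteq> {..<n} \<longrightarrow> eval B a p = eval B a q \<longrightarrow>
          (\<forall>(B' :: nat malg) b. in_VL L B' \<longrightarrow> assign B' b \<longrightarrow>
              (\<forall>(s,u)\<in>E. eval B' b s = eval B' b u) \<longrightarrow> eval B' b p = eval B' b q)"
    using Bfp unfolding fin_pres_def by blast
  have gen_repr: "\<exists>q. vars q \<subseteq> Vp \<and> z = A.cls q" if z: "z \<in> gen A.LA Gs" for z
  proof -
    obtain v p where vp: "z = eval A.LA v p" "\<forall>i. v i \<in> insert (mbot A.LA) Gs"
      using z unfolding gen_def by blast
    define \<sigma> where "\<sigma> i = (if v i \<in> Gs then Var (SOME j. j \<in> Vp \<and> v i = A.gv j) else Bot)" for i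
    have v\<sigma>: "v i = A.cls (\<sigma> i) \<and> vars (\<sigma> i) \<subseteq> Vp" for i
    proof (cases "v i \<in> Gs")
      case True
      then have "\<exists>j. j \<in> Vp \<and> v i = A.gv j" unfolding Gs_def by blast
      then have j: "(SOME j. j \<in> Vp \<and> v i = A.gv j) \<in> Vp \<and> v i = A.gv (SOME j. j \<in> Vp \<and> v i = A.gv j)"
        by (rule someI_ex)
      define j0 where "j0 = (SOME j. j \<in> Vp \<and> v i = A.gv j)"
      have j0: "j0 \<in> Vp" "v i = A.gv j0" using j unfolding j0_def by auto
      have "\<sigma> i = Var j0" unfolding \<sigma>_def j0_def using True by simp
      moreover have "A.gv j0 = A.cls (Var j0)" unfolding A.gv_def using j0(1) Vp_N by auto
      ultimately show ?thesis using j0 by simp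
    next
      case False then show ?thesis using vp(2) unfolding \<sigma>_def by auto
    qed
    have vA: "assign A.LA v" unfolding assign_def
      using v\<sigma> Vp_N by (auto intro!: A.cls_in)
    have "z = A.cls (subst (\<lambda>i. from_nat (v i)) p)" using vp(1) A.eval_LA[OF vA] by simp
    also have "\<dots> = A.cls (subst \<sigma> p)"
      by (rule A.eqv_cls, rule A.eqv_subst) (use v\<sigma> in \<open>simp add: A.rep_eqv'\<close>)
    finally have "z = A.cls (subst \<sigma> p)" .
    moreover have "vars (subst \<sigma> p) \<subseteq> Vp" unfolding vars_subst using v\<sigma> by blast
    ultimately show ?thesis by blast
  qed
  have "\<forall>i. \<exists>q. vars q \<subseteq> Vp \<and> a i = A.cls q"
    using aB gen_repr carB unfolding assign_def by blast
  then obtain qf where qf: "\<forall>i. vars (qf i) \<subseteq> Vp \<and> a i = A.cls (qf i)" by metis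
  have aA: "assign A.LA a" unfolding assign_def using qf Vp_N by (auto intro!: A.cls_in)
  have eval_a: "eval A.LA a P = A.cls (subst qf P)" for P
  proof -
    have "eval A.LA a P = A.cls (subst (\<lambda>i. from_nat (a i)) P)" by (rule A.eval_LA[OF aA])
    also have "\<dots> = A.cls (subst qf P)"
      by (rule A.eqv_cls, rule A.eqv_subst) (use qf in \<open>simp add: A.rep_eqv'\<close>)
    finally show ?thesis .
  qed
  have vqf: "vars (subst qf P) \<subseteq> Vp" for P unfolding vars_subst using qf by blast
  have gv_in: "A.gv j \<in> mcar B" if "j \<in> Vp" for j
  proof -
    have "eval A.LA (\<lambda>_. A.gv j) (Var 0) \<in> gen A.LA Gs" unfolding gen_def Gs_def using that by blast
    then show ?thesis using carB by simp
  qed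
  have "\<forall>j\<in>Vp. \<exists>r. vars r \<subseteq> {..<n} \<and> A.gv j = eval A.LA a r"
  proof
    fix j assume "j \<in> Vp"
    then have "A.gv j \<in> {eval B a p |p. vars p \<subseteq> {..<n}}" using gv_in cB by simp
    then show "\<exists>r. vars r \<subseteq> {..<n} \<and> A.gv j = eval A.LA a r" unfolding evB by blast
  qed
  then obtain rf where rf: "\<forall>j\<in>Vp. vars (rf j) \<subseteq> {..<n} \<and> A.gv j = eval A.LA a (rf j)"
    by (rule bchoice[elim_format]) blast
  have Kj: "\<forall>j\<in>Vp. \<exists>K. prov (SK K) (Iff (subst qf (rf j)) (Var j))"
  proof
    fix j assume j: "j \<in> Vp"
    have 1: "A.gv j = eval A.LA a (rf j)" using rf j by blast
    have 2: "A.gv j = A.cls (Var j)" using j Vp_N unfolding A.gv_def by auto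
    have "A.cls (subst qf (rf j)) = A.cls (Var j)"
      using 1 2 eval_a[of "rf j"] by simp
    then show "\<exists>K. prov (SK K) (Iff (subst qf (rf j)) (Var j))" using KC' vqf j by simp
  qed
  have Ke: "\<forall>e\<in>E. \<exists>K. prov (SK K) (Iff (subst qf (fst e)) (subst qf (snd e)))"
  proof
    fix e assume e: "e \<in> E"
    have "eval B a (fst e) = eval B a (snd e)" using Eh e by (cases e) auto
    then have "A.cls (subst qf (fst e)) = A.cls (subst qf (snd e))" using evB eval_a by simp
    then show "\<exists>K. prov (SK K) (Iff (subst qf (fst e)) (subst qf (snd e)))" using KC' vqf by blast
  qed
  obtain fj where fj: "\<forall>j\<in>Vp. prov (SK (fj j)) (Iff (subst qf (rf j)) (Var j))"
    using bchoice[OF Kj] by blast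
  obtain fe where fe: "\<forall>e\<in>E. prov (SK (fe e)) (Iff (subst qf (fst e)) (subst qf (snd e)))"
    using bchoice[OF Ke] by blast
  define K0 where "K0 = Max (insert 0 (fj ` Vp \<union> fe ` E))"
  have finK: "finite (insert 0 (fj ` Vp \<union> fe ` E))" using Vp_fin fE by simp
  have Kj0: "\<forall>j\<in>Vp. prov (SK K0) (Iff (subst qf (rf j)) (Var j))"
  proof
    fix j assume j: "j \<in> Vp"
    have "fj j \<le> K0" unfolding K0_def by (rule Max_ge[OF finK]) (use j in blast)
    moreover have "prov (SK (fj j)) (Iff (subst qf (rf j)) (Var j))" using fj j by blast
    ultimately show "prov (SK K0) (Iff (subst qf (rf j)) (Var j))" using prov_mono[OF SK_mono] by blast
  qed
  have Ke0: "\<forall>e\<in>E. prov (SK K0) (Iff (subst qf (fst e)) (subst qf (snd e)))"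
  proof
    fix e assume e: "e \<in> E"
    have "fe e \<le> K0" unfolding K0_def by (rule Max_ge[OF finK]) (use e in blast)
    moreover have "prov (SK (fe e)) (Iff (subst qf (fst e)) (subst qf (snd e)))" using fe e by blast
    ultimately show "prov (SK K0) (Iff (subst qf (fst e)) (subst qf (snd e)))" using prov_mono[OF SK_mono] by blast
  qed
  define T0 where "T0 = And (Var w) (I (Suc K0))"
  have vT0: "vars T0 \<subseteq> Vp" unfolding T0_def using x_N(5) vars_I_Vp[of "Suc K0"] by (simp del: iter.simps)
  have T0bot: "A.cls T0 = A.cls Bot"
  proof (rule A.eqv_cls, unfold A.eqv_def)
    have h1: "prov {dlt} (Imp (I (Suc K0)) (Neg (Var y)))" by (rule dlt_cons[OF pos])
    show "prov {dlt} (Iff T0 Bot)" unfolding T0_def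
      by (rule prov_taut2[OF h1 prov_G[OF singletonI[of dlt]]]) (unfold dlt_def pv_Imp pv_Iff pv.simps, blast)
  qed
  define rf' where "rf' j = (if j \<in> Vp then rf j else Bot)" for j
  define Pt where "Pt = subst rf' T0"
  have rfv: "vars (rf' j) \<subseteq> {..<n}" for j
  proof (cases "j \<in> Vp")
    case True then show ?thesis unfolding rf'_def using rf by simp
  qed (simp add: rf'_def)
  have vPt: "vars Pt \<subseteq> {..<n}" unfolding Pt_def vars_subst using rfv by blast
  have "eval A.LA a Pt = eval A.LA A.gv T0" unfolding Pt_def eval_subst
    by (rule eval_cong) (use vT0 rf in \<open>auto simp: rf'_def\<close>)
  also have "\<dots> = A.cls T0" by (rule A.eval_gv) (use vT0 Vp_N in blast)
  also have "\<dots> = eval A.LA a Bot" using T0bot by simp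
  finally have "eval A.LA a Pt = eval A.LA a Bot" .
  then have ePt: "eval B a Pt = eval B a Bot" by (simp only: evB)
  define \<phi> where "\<phi> j = (if j = w then Neg (I K0) else Var j)" for j
  define b where "b i = F.cls (subst \<phi> (qf i))" for i
  have qfv: "vars (qf i) \<subseteq> Vp" for i using qf by blast
  have phv: "vars (\<phi> j) \<subseteq> {..<NN}" if "j \<in> Vp" for j
    using that Vp_N vars_I_N[of K0] unfolding \<phi>_def by auto
  have v\<phi>: "vars (subst \<phi> (qf i)) \<subseteq> {..<NN}" for i
    unfolding vars_subst using qfv phv by blast
  have bF: "assign F.LA b" unfolding assign_def b_def using v\<phi> by (auto intro!: F.cls_in)
  have eval_b: "eval F.LA b P = F.cls (subst \<phi> (subst qf P))" for P
  proof -
    have "eval F.LA b P = F.cls (subst (\<lambda>i. from_nat (b i)) P)" by (rule F.eval_LA[OF bF])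
    also have "\<dots> = F.cls (subst (\<lambda>i. subst \<phi> (qf i)) P)"
      by (rule F.eqv_cls, rule F.eqv_subst) (simp add: b_def F.rep_eqv')
    finally show ?thesis by (simp add: subst_subst)
  qed
  have phiL: "\<forall>g\<in>SK K0. subst \<phi> g \<in> L"
  proof
    fix g assume "g \<in> SK K0"
    then obtain k where k: "k \<le> K0" "g = Neg (And (Var w) (I k))" unfolding SK_def by blast
    have "subst \<phi> g = Neg (And (Neg (I K0)) (I k))" unfolding k(2) \<phi>_def using subst_phi_I by simp
    moreover have "Neg (And (Neg (I K0)) (I k)) \<in> L" by (rule L_taut1[OF I_mono[OF k(1)]]) (unfold pv_Imp pv.simps, blast)
    ultimately show "subst \<phi> g \<in> L" by simp
  qed
  have provF: "F.cls (subst \<phi> P) = F.cls (subst \<phi> Q)" if "prov (SK K0) (Iff P Q)" for P Q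
  proof -
    have "Iff (subst \<phi> P) (subst \<phi> Q) \<in> L" using prov_subst[OF that phiL] by simp
    then show ?thesis by (intro F.eqv_cls) (unfold F.eqv_def, rule prov_L)
  qed
  have Ehold': "eval F.LA b s = eval F.LA b u" if "(s, u) \<in> E" for s u
    using provF[OF Ke0[rule_format, OF that]] eval_b by simp
  then have Ehold: "\<forall>(s,u)\<in>E. eval F.LA b s = eval F.LA b u" by blast
  have vBot: "vars Bot \<subseteq> {..<n}" by simp
  have "eval F.LA b Pt = eval F.LA b Bot"
    by (rule cons[rule_format, OF vPt vBot ePt F.in_VL_LA bF]) (use Ehold in blast)
  then have "F.cls (subst \<phi> (subst qf Pt)) = F.cls Bot" using eval_b by simp
  moreover have "F.cls (subst \<phi> (subst qf Pt)) = F.cls (subst \<phi> T0)"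
  proof -
    have "subst \<phi> (subst qf Pt) = subst (\<lambda>j. subst \<phi> (subst qf (rf' j))) T0"
      unfolding Pt_def by (simp add: subst_subst)
    moreover have "F.cls (subst (\<lambda>j. subst \<phi> (subst qf (rf' j))) T0) = F.cls (subst \<phi> T0)"
    proof (rule F.eqv_cls, rule F.eqv_subst)
      fix j assume j: "j \<in> vars T0"
      then have jV: "j \<in> Vp" using vT0 by blast
      have "F.cls (subst \<phi> (subst qf (rf j))) = F.cls (subst \<phi> (Var j))"
        using provF[OF Kj0[rule_format, OF jV]] .
      then show "F.eqv (subst \<phi> (subst qf (rf' j))) (\<phi> j)" using jV F.cls_eq unfolding rf'_def by simp
    qed
    ultimately show ?thesis by simp
  qed
  ultimately have "F.cls (subst \<phi> T0) = F.cls Bot" by simp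
  then have "prov {} (Iff (subst \<phi> T0) Bot)" using F.cls_eq unfolding F.eqv_def by blast
  then have "subst Var (Iff (subst \<phi> T0) Bot) \<in> L" using prov_subst by blast
  moreover have sT0: "subst \<phi> T0 = And (Neg (I K0)) (I (Suc K0))"
    unfolding T0_def \<phi>_def using subst_phi_I[of "Neg (I K0)" "Suc K0"] by (simp del: iter.simps)
  ultimately have h: "Iff (And (Neg (I K0)) (I (Suc K0))) Bot \<in> L"
    unfolding subst_Var by simp
  have "Iff (I K0) (I (Suc K0)) \<in> L"
    by (rule L_taut1[OF h]) (unfold I_Suc pv_Iff pv.simps, blast)
  then show ?thesis by blast
qed

end


theorem corollary4p7:
  assumes "normal_logic L"
    and "coherent L"
    and "countably_canonical L"
    and "stable t"
    and "pos_only x t"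
  shows "\<exists>n. Iff (iter x (tplus x t) n) (iter x (tplus x t) (Suc n)) \<in> L"
proof -
  interpret MS L x t by unfold_locales (rule assms(1))
  show ?thesis using main[OF assms(2) assms(3) assms(4) assms(5)] .
qed

end
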